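(* Let $S$ be an instance of SCS-RC, let $\mathcal C$ be the (optimal) cycle cover of $G_S$ produced by \textsf{MGREEDY-RC}, for each $C\in\mathcal C$ let $x_C$ be a string satisfying properties (1)–(4) below, and let $A=\{x_C: C\in\mathcal C\}$. Then $\mathrm{OPT}(A) \le \mathrm{OPT}(S) + w(\mathrm{CYC}(G_S))$.
   Context: Alphabet $\Sigma=\{\texttt a,\texttt t,\texttt g,\texttt c\}$ with complement $\bar{\texttt a}=\texttt t$, $\bar{\texttt t}=\texttt a$, $\bar{\texttt g}=\texttt c$, $\bar{\texttt c}=\texttt g$; the reverse complement of $s=b_1\cdots b_n$ is $\bar{s}^R=\bar{b_n}\cdots\bar{b_1}$, and $\bar S^R=\{\bar s^R: s\in S\}$. An instance of SCS-RC is a finite set $S=\{s_1,\dots,s_m\}$ of strings over $\Sigma$ such that no string of $S\cup\bar S^R$ is a substring of another; for a finite set $U$ of strings, $\mathrm{OPT}(U)$ is the minimum length of a string containing, for each $u\in U$, $u$ or $\bar u^R$ as a substring. For strings $x,y$, $\mathrm{ov}(x,y)$ is the length of the longest $v$ with $x=uv$, $y=vw$ for nonempty $u,w$; $\mathrm{pref}(x,y)=u$; $\mathrm{dist}(x,y)=|x|-\mathrm{ov}(x,y)$; $\langle x_1,\dots,x_r\rangle=\mathrm{pref}(x_1,x_2)\cdots\mathrm{pref}(x_{r-1},x_r)\,x_r$. The distance graph $G_S$ is the complete directed graph (with loops) on $S\cup\bar S^R$ with edge weights $\mathrm{dist}$; a cycle $z_1,\dots,z_r,z_1$ (distinct vertices)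 has weight $w(C)=\sum_i\mathrm{dist}(z_i,z_{i+1})$, $z_{r+1}=z_1$; a cycle cover contains, as vertex-disjoint cycles, exactly one of $s_i,\bar{s_i}^R$ for each $i$; $w(\mathrm{CYC}(G_S))$ is the minimum total weight of a cycle cover. \textsf{MGREEDY-RC} on $S$: set $T=\emptyset$; while $S\ne\emptyset$: among pairs $(x,y)\in (S\cup\bar S^R)^2$ with $x=y$, or with $x\ne y$ and $\bar x^R\ne y$, pick one maximizing $\mathrm{ov}(x,y)$ (ties arbitrary); if $x=y$, remove $x,\bar x^R$ from $S$ and add $x$ to $T$; otherwise remove $x,\bar x^R,y,\bar y^R$ from $S$ and add $\langle x,y\rangle$. Each current string $z$ is associated with a sequence $(z_1,\dots,z_h)$ of vertices with $z=\langle z_1,\dots,z_h\rangle$: initially $s_i\leftrightarrow(s_i)$; $\bar z^R\leftrightarrow(\bar{z_h}^R,\dots,\bar{z_1}^R)$; $\langle x,y\rangle$ gets the concatenation of the sequences of $x$ and $y$; when $z$ with sequence $(z_1,\dots,z_h)$ moves to $T$, the cycle $z_1,\dots,z_h,z_1$ is formed. These cycles form the cycle cover $\mathcal C$, which is optimal. Periodicity: for a finite string $s$, $\mathrm{factor}(s)$ is the shortest $x$ with $s=x^iy$, $i\ge1$, $y$ a (possibly empty) prefix of $x$; for a semi-infinite $s$ with $s=xs$ for some nonempty $x$, $\mathrm{factor}(s)$ is the shortest such $x$; $\mathrm{period}(s)=|\mathrm{factor}(s)|$. $x,y$ are equivalent if $\mathrm{factor}(x)=pq$, $\mathrm{factor}(y)=qp$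 for some $p,q$, inequivalent otherwise. For semi-infinite $\alpha=c_1c_2\cdots$, $\alpha[k]=c_kc_{k+1}\cdots$; $\mathrm{ov}(s,\alpha[k])$ is the length of the longest $v$ with $s=uv$, $u$ nonempty, $v$ a prefix of $\alpha[k]$. $\alpha[k]$ is a critical rotation of periodic $\alpha$ if $\mathrm{ov}(s,\alpha[k])\le\mathrm{period}(s)+\tfrac12\mathrm{period}(\alpha)$ for every finite $s$ inequivalent to $\alpha$. Properties of $x_C$, for $C=z_1,\dots,z_r,z_1$ with $(z_1,\dots,z_r)$ its sequence as produced by the algorithm: there is $j\in\{1,\dots,r\}$ such that (1) $\langle z_{j+1},\dots,z_r,z_1,\dots,z_j\rangle$ is a suffix of $x_C$; (2) $x_C$ is a substring of $y_C=\langle z_j,\dots,z_r,z_1,\dots,z_j\rangle$; (3) $x_C$ is equivalent to $\langle z_{j+1},\dots,z_r,z_1,\dots,z_j\rangle$; (4) $\mathrm{factor}(x_C)^\infty$ is a critical rotation of $\mathrm{factor}(\langle z_1,\dots,z_r\rangle)^\infty$. (Such strings are known to exist.) *)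

theory Defs
  imports Complex_Main "HOL-Library.Sublist"
begin

datatype base = bA | bT | bG | bC

type_synonym dna = "base list"

fun compl :: "base \<Rightarrow> base" where
  "compl bA = bT" | "compl bT = bA" | "compl bG = bC" | "compl bC = bG"

definition rc :: "dna \<Rightarrow> dna" where
  "rc s = rev (map compl s)"

definition vertices :: "dna set \<Rightarrow> dna set" where
  "vertices S = S \<union> rc ` S"

definition scs_rc_instance :: "dna set \<Rightarrow> bool" where
  "scs_rc_instance S \<longleftrightarrow> finite S \<and>
     (\<forall>u\<in>vertices S. \<forall>v\<in>vertices S. u \<noteq> v \<longrightarrow> \<not> sublist u v)"

definition OPT :: "dna set \<Rightarrow> nat" where
  "OPT U = (LEAST n. \<exists>w. length w = n \<and> (\<forall>u\<in>U. sublist u w \<or> sublist (rc u) w))"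

definition ov :: "dna \<Rightarrow> dna \<Rightarrow> nat" where
  "ov x y = Max (insert 0 {k. k < length x \<and> k < length y \<and> drop (length x - k) x = take k y})"

definition pref :: "dna \<Rightarrow> dna \<Rightarrow> dna" where
  "pref x y = take (length x - ov x y) x"

definition dst :: "dna \<Rightarrow> dna \<Rightarrow> nat" where
  "dst x y = length x - ov x y"

fun mrg :: "dna list \<Rightarrow> dna" where
  "mrg [] = []"
| "mrg [x] = x"
| "mrg (x # y # zs) = pref x y @ mrg (y # zs)"

definition cyc_weight :: "dna list \<Rightarrow> nat" where
  "cyc_weight zs = (\<Sum>i<length zs. dst (zs ! i) (zs ! ((i + 1) mod length zs)))"

definition is_cycle_cover :: "dna set \<Rightarrow> dna list list \<Rightarrow> bool" where
  "is_cycle_cover S cs \<longleftrightarrow>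
     (\<forall>c\<in>set cs. c \<noteq> []) \<and> distinct (concat cs) \<and>
     set (concat cs) \<subseteq> vertices S \<and>
     (\<forall>s\<in>S. (s \<in> set (concat cs) \<or> rc s \<in> set (concat cs)) \<and>
             (s \<noteq> rc s \<longrightarrow> \<not> (s \<in> set (concat cs) \<and> rc s \<in> set (concat cs))))"

definition wCYC :: "dna set \<Rightarrow> nat" where
  "wCYC S = (LEAST w. \<exists>cs. is_cycle_cover S cs \<and> w = sum_list (map cyc_weight cs))"

text \<open>A current string together with its associated sequence of vertices.\<close>
type_synonym item = "dna \<times> dna list"

definition rcI :: "item \<Rightarrow> item" where
  "rcI it = (rc (fst it), rev (map rc (snd it)))"

definition items :: "item set \<Rightarrow> item set" where
  "items P = P \<union> rcI ` P"

definition allowed :: "item set \<Rightarrow> item \<Rightarrow> item \<Rightarrow> bool" where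
  "allowed P x y \<longleftrightarrow> x \<in> items P \<and> y \<in> items P \<and> (x = y \<or> (x \<noteq> y \<and> rcI x \<noteq> y))"

definition greedy_max :: "item set \<Rightarrow> item \<Rightarrow> item \<Rightarrow> bool" where
  "greedy_max P x y \<longleftrightarrow> allowed P x y \<and>
     (\<forall>x' y'. allowed P x' y' \<longrightarrow> ov (fst x') (fst y') \<le> ov (fst x) (fst y))"

text \<open>greedy_run S P Cs: some execution of MGREEDY-RC (ties broken arbitrarily) on S reaches a
  state whose current strings (one orientation per string, with associated sequences) are P and
  whose cycles formed so far are Cs (in order). The produced cycle cover is Cs when P = {}.\<close>
inductive greedy_run :: "dna set \<Rightarrow> item set \<Rightarrow> dna list list \<Rightarrow> bool" for S where
  init: "greedy_run S ((\<lambda>s. (s, [s])) ` S) []"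
| close: "greedy_run S P Cs \<Longrightarrow> greedy_max P x x \<Longrightarrow>
           greedy_run S (P - {x, rcI x}) (Cs @ [snd x])"
| join: "greedy_run S P Cs \<Longrightarrow> greedy_max P x y \<Longrightarrow> x \<noteq> y \<Longrightarrow>
           greedy_run S (insert (pref (fst x) (fst y) @ fst y, snd x @ snd y)
                                (P - {x, rcI x, y, rcI y})) Cs"

definition fac_decomp :: "dna \<Rightarrow> dna \<Rightarrow> bool" where
  "fac_decomp s x \<longleftrightarrow> (\<exists>i y. i \<ge> 1 \<and> s = concat (replicate i x) @ y \<and> prefix y x)"

definition sfactor :: "dna \<Rightarrow> dna" where
  "sfactor s = (SOME x. fac_decomp s x \<and> (\<forall>x'. fac_decomp s x' \<longrightarrow> length x \<le> length x'))"

definition speriod :: "dna \<Rightarrow> nat" where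
  "speriod s = length (sfactor s)"

text \<open>Semi-infinite strings c_1 c_2 ... are functions nat \<Rightarrow> base (c_{n+1} at index n).\<close>
type_synonym inf = "nat \<Rightarrow> base"

definition cons_inf :: "dna \<Rightarrow> inf \<Rightarrow> inf" where
  "cons_inf x \<alpha> = (\<lambda>n. if n < length x then x ! n else \<alpha> (n - length x))"

definition inf_period :: "inf \<Rightarrow> dna \<Rightarrow> bool" where
  "inf_period \<alpha> x \<longleftrightarrow> x \<noteq> [] \<and> \<alpha> = cons_inf x \<alpha>"

definition periodic_inf :: "inf \<Rightarrow> bool" where
  "periodic_inf \<alpha> \<longleftrightarrow> (\<exists>x. inf_period \<alpha> x)"

definition ifactor :: "inf \<Rightarrow> dna" where
  "ifactor \<alpha> = (SOME x. inf_period \<alpha> x \<and> (\<forall>x'. inf_period \<alpha> x' \<longrightarrow> length x \<le> length x'))"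

definition iperiod :: "inf \<Rightarrow> nat" where
  "iperiod \<alpha> = length (ifactor \<alpha>)"

definition omega :: "dna \<Rightarrow> inf" where
  "omega x = (\<lambda>n. x ! (n mod length x))"

text \<open>\<alpha>[k] = c_k c_{k+1} ... (k \<ge> 1)\<close>
definition shift :: "inf \<Rightarrow> nat \<Rightarrow> inf" where
  "shift \<alpha> k = (\<lambda>n. \<alpha> (n + k - 1))"

definition ov_inf :: "dna \<Rightarrow> inf \<Rightarrow> nat" where
  "ov_inf s \<beta> = Max (insert 0 {k. k < length s \<and> (\<forall>i<k. drop (length s - k) s ! i = \<beta> i)})"

definition fac_equiv :: "dna \<Rightarrow> dna \<Rightarrow> bool" where
  "fac_equiv f g \<longleftrightarrow> (\<exists>p q. f = p @ q \<and> g = q @ p)"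

definition equivalent :: "dna \<Rightarrow> dna \<Rightarrow> bool" where
  "equivalent x y \<longleftrightarrow> fac_equiv (sfactor x) (sfactor y)"

definition equivalent_inf :: "dna \<Rightarrow> inf \<Rightarrow> bool" where
  "equivalent_inf s \<alpha> \<longleftrightarrow> fac_equiv (sfactor s) (ifactor \<alpha>)"

definition critical_rotation :: "inf \<Rightarrow> nat \<Rightarrow> bool" where
  "critical_rotation \<alpha> k \<longleftrightarrow> periodic_inf \<alpha> \<and> k \<ge> 1 \<and>
     (\<forall>s. \<not> equivalent_inf s \<alpha> \<longrightarrow>
        real (ov_inf s (shift \<alpha> k)) \<le> real (speriod s) + real (iperiod \<alpha>) / 2)"

text \<open>zs = [z_1,...,z_r] is the sequence of cycle C; rotate j zs = [z_{j+1},...,z_r,z_1,...,z_j];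
  z_j = zs ! (j - 1).\<close>
definition xC_props :: "dna list \<Rightarrow> dna \<Rightarrow> bool" where
  "xC_props zs x \<longleftrightarrow> (\<exists>j\<in>{1..length zs}.
      suffix (mrg (rotate j zs)) x \<and>
      sublist x (mrg (zs ! (j - 1) # rotate j zs)) \<and>
      equivalent x (mrg (rotate j zs)) \<and>
      (\<exists>k\<ge>1. omega (sfactor x) = shift (omega (sfactor (mrg zs))) k \<and>
              critical_rotation (omega (sfactor (mrg zs))) k))"

end

theory Submission
  imports Defs "HOL-Library.Multiset"
begin

lemma compl_compl[simp]: "compl (compl b) = b" by (cases b) auto
lemma length_rc[simp]: "length (rc s) = length s" by (simp add: rc_def)
lemma rc_rc[simp]: "rc (rc s) = s" by (simp add: rc_def rev_map comp_def)
lemma rc_append[simp]: "rc (a @ b) = rc b @ rc a" by (simp add: rc_def)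
lemma rc_nth: "i < length s \<Longrightarrow> rc s ! i = compl (s ! (length s - Suc i))"
  by (simp add: rc_def rev_nth)
lemma rc_inj: "rc a = rc b \<Longrightarrow> a = b" by (metis rc_rc)
lemma rc_Nil[simp]: "rc [] = []" by (simp add: rc_def)
lemma rc_eq_Nil[simp]: "rc s = [] \<longleftrightarrow> s = []" by (simp add: rc_def)

lemma ov_set_finite: "finite {k. k < length x \<and> k < length y \<and> drop (length x - k) x = take k y}"
  by (rule finite_subset[of _ "{..<length x}"]) auto

lemma ov_cases: "ov x y = 0 \<or> (ov x y < length x \<and> ov x y < length y \<and> drop (length x - ov x y) x = take (ov x y) y)"
proof -
  let ?A = "{k. k < length x \<and> k < length y \<and> drop (length x - k) x = take k y}"
  have "ov x y \<in> insert 0 ?A" unfolding ov_def using ov_set_finite by (intro Max_in) auto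
  then show ?thesis by auto
qed

lemma ov_drop_take: "drop (length x - ov x y) x = take (ov x y) y"
  using ov_cases[of x y] by auto

lemma ov_ge: "k < length x \<Longrightarrow> k < length y \<Longrightarrow> drop (length x - k) x = take k y \<Longrightarrow> k \<le> ov x y"
  unfolding ov_def using ov_set_finite by (intro Max_ge) auto

lemma ov_le1: "ov x y \<le> length x" using ov_cases[of x y] by auto
lemma ov_le2: "ov x y \<le> length y" using ov_cases[of x y] by auto
lemma ov_lt: "ov x y \<noteq> 0 \<Longrightarrow> ov x y < length x \<and> ov x y < length y" using ov_cases[of x y] by auto

lemma ov_nth: "i < ov x y \<Longrightarrow> x ! (length x - ov x y + i) = y ! i"
proof -
  assume i: "i < ov x y"
  have "drop (length x - ov x y) x ! i = take (ov x y) y ! i" by (simp add: ov_drop_take)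
  then show ?thesis using i ov_le1[of x y] ov_le2[of x y] by simp
qed

lemma ov_geI: "k < length x \<Longrightarrow> k < length y \<Longrightarrow> (\<And>i. i < k \<Longrightarrow> x ! (length x - k + i) = y ! i) \<Longrightarrow> k \<le> ov x y"
  by (rule ov_ge) (auto intro!: nth_equalityI)

lemma ov_rc_ge: "ov x y \<le> ov (rc y) (rc x)"
proof (cases "ov x y = 0")
  case False
  then have l: "ov x y < length x" "ov x y < length y" using ov_lt by auto
  show ?thesis
  proof (rule ov_geI)
    fix i assume i: "i < ov x y"
    let ?k = "ov x y"
    have "rc y ! (length y - ?k + i) = compl (y ! (length y - Suc (length y - ?k + i)))"
      using l i by (simp add: rc_nth)
    also have "length y - Suc (length y - ?k + i) = ?k - Suc i" using l i by simp
    also have "y ! (?k - Suc i) = x ! (length x - ?k + (?k - Suc i))" using ov_nth[of "?k - Suc i" x y] i by simp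
    also have "length x - ?k + (?k - Suc i) = length x - Suc i" using l i by simp
    finally show "rc y ! (length (rc y) - ?k + i) = rc x ! i" using l i by (simp add: rc_nth)
  qed (use l in auto)
qed simp

lemma ov_rc[simp]: "ov (rc y) (rc x) = ov x y"
  using ov_rc_ge[of x y] ov_rc_ge[of "rc y" "rc x"] by simp

lemma sublist_nth: "sublist w z \<longleftrightarrow> (\<exists>i. i + length w \<le> length z \<and> (\<forall>j<length w. z ! (i + j) = w ! j))"
proof
  assume "sublist w z"
  then obtain p s where z: "z = p @ w @ s" by (auto simp: sublist_def)
  then show "\<exists>i. i + length w \<le> length z \<and> (\<forall>j<length w. z ! (i + j) = w ! j)"
    by (intro exI[of _ "length p"]) (auto simp: nth_append)
next
  assume "\<exists>i. i + length w \<le> length z \<and> (\<forall>j<length w. z ! (i + j) = w ! j)"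
  then obtain i where i: "i + length w \<le> length z" "\<forall>j<length w. z ! (i + j) = w ! j" by auto
  have "w = take (length w) (drop i z)" using i by (intro nth_equalityI) auto
  then have "z = take i z @ w @ drop (length w) (drop i z)"
    by (metis append_take_drop_id)
  then show "sublist w z" unfolding sublist_def by blast
qed

lemma prefix_nth: "prefix w z \<longleftrightarrow> length w \<le> length z \<and> (\<forall>j<length w. z ! j = w ! j)"
proof
  assume "prefix w z" then show "length w \<le> length z \<and> (\<forall>j<length w. z ! j = w ! j)"
    by (auto simp: prefix_def nth_append)
next
  assume a: "length w \<le> length z \<and> (\<forall>j<length w. z ! j = w ! j)"
  have "w = take (length w) z" using a by (intro nth_equalityI) auto
  then show "prefix w z" by (metis prefix_def append_take_drop_id)
qed

lemma suffix_nth: "suffix w z \<longleftrightarrow> length w \<le> length z \<and> (\<forall>j<length w. z ! (length z - length w + j) = w ! j)"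
proof
  assume "suffix w z" then obtain p where "z = p @ w" by (auto simp: suffix_def)
  then show "length w \<le> length z \<and> (\<forall>j<length w. z ! (length z - length w + j) = w ! j)"
    by (auto simp: nth_append)
next
  assume a: "length w \<le> length z \<and> (\<forall>j<length w. z ! (length z - length w + j) = w ! j)"
  have "w = drop (length z - length w) z" using a by (intro nth_equalityI) auto
  then show "suffix w z" by (metis suffix_def append_take_drop_id)
qed

lemma sublist_rc: "sublist x y \<Longrightarrow> sublist (rc x) (rc y)"
  by (auto simp: sublist_def) (metis append_assoc rc_append)

lemma suffixD: "suffix w z \<Longrightarrow> j < length w \<Longrightarrow> n = length z - length w + j \<Longrightarrow> z ! n = w ! j"
  unfolding suffix_nth by (metis)
lemma prefixD: "prefix w z \<Longrightarrow> j < length w \<Longrightarrow> z ! j = w ! j"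
  by (simp add: prefix_nth)
lemma ov_nth': "i < ov x y \<Longrightarrow> n = length x - ov x y + i \<Longrightarrow> x ! n = y ! i"
  using ov_nth by blast

lemma ov_suffix_prefix: "suffix a X \<Longrightarrow> prefix b Y \<Longrightarrow> ov a b \<le> ov X Y"
proof (cases "ov a b = 0")
  case False
  assume s: "suffix a X" and p: "prefix b Y"
  have l: "ov a b < length a" "ov a b < length b" using ov_lt[OF False] by auto
  have la: "length a \<le> length X" and lb: "length b \<le> length Y" using s p
    by (auto simp: suffix_nth prefix_nth)
  show ?thesis
  proof (rule ov_geI)
    fix i assume i: "i < ov a b"
    have "X ! (length X - ov a b + i) = a ! (length a - ov a b + i)"
      by (rule suffixD[OF s]) (use l la i in auto)
    also have "\<dots> = b ! i" using ov_nth[OF i] .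
    also have "\<dots> = Y ! i" using p l i by (simp add: prefix_nth)
    finally show "X ! (length X - ov a b + i) = Y ! i" .
  qed (use l la lb in auto)
qed simp

lemma ov_inner: "suffix a X \<Longrightarrow> prefix b Y \<Longrightarrow> ov X Y < length a \<Longrightarrow> ov X Y < length b \<Longrightarrow> ov X Y \<le> ov a b"
proof -
  assume s: "suffix a X" and p: "prefix b Y" and l: "ov X Y < length a" "ov X Y < length b"
  have la: "length a \<le> length X" and lb: "length b \<le> length Y" using s p
    by (auto simp: suffix_nth prefix_nth)
  show ?thesis
  proof (rule ov_geI)
    fix i assume i: "i < ov X Y"
    have "a ! (length a - ov X Y + i) = X ! (length X - ov X Y + i)"
      by (rule suffixD[OF s, symmetric]) (use l la i in auto)
    also have "\<dots> = Y ! i" using ov_nth[OF i] .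
    also have "\<dots> = b ! i" using p l i by (simp add: prefix_nth)
    finally show "a ! (length a - ov X Y + i) = b ! i" .
  qed (use l in auto)
qed

lemma ov_eq_ends: "suffix a X \<Longrightarrow> prefix b Y \<Longrightarrow> (ov X Y \<noteq> 0 \<longrightarrow> ov X Y < length a \<and> ov X Y < length b) \<Longrightarrow> ov a b = ov X Y"
  using ov_suffix_prefix[of a X b Y] ov_inner[of a X b Y] by (cases "ov X Y = 0") auto

lemma monge:
  assumes "ov a d \<le> ov a b" "ov c b \<le> ov a b"
  shows "ov a d + ov c b \<le> ov a b + ov c d"
proof (cases "ov a d + ov c b \<le> ov a b")
  case True then show ?thesis by simp
next
  case False
  define k where "k = ov a b"
  define p where "p = ov a d"
  define q where "q = ov c b"
  define m where "m = p + q - k"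
  have pk: "p \<le> k" "q \<le> k" using assms by (auto simp: k_def p_def q_def)
  have m0: "m > 0" "p > 0" "q > 0" using False pk by (auto simp: m_def k_def p_def q_def)
  have lp: "p < length a" "p < length d" using ov_lt[of a d] m0 by (auto simp: p_def)
  have lq: "q < length c" "q < length b" using ov_lt[of c b] m0 by (auto simp: q_def)
  have lk: "k < length a" "k < length b" using ov_lt[of a b] m0 pk by (auto simp: k_def)
  have "m \<le> ov c d"
  proof (rule ov_geI)
    fix i assume i: "i < m"
    have "c ! (length c - m + i) = c ! (length c - q + (q - m + i))"
      by (rule arg_cong[where f="(!) c"]) (use i lq pk m0 in \<open>simp add: m_def\<close>)
    also have "\<dots> = b ! (q - m + i)" using ov_nth[of "q - m + i" c b] i pk by (simp add: q_def m_def)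
    also have "\<dots> = a ! (length a - k + (q - m + i))" using ov_nth[of "q - m + i" a b] i pk by (simp add: k_def m_def)
    also have "length a - k + (q - m + i) = length a - p + i" using i pk lk m0 by (simp add: m_def)
    also have "a ! \<dots> = d ! i" using ov_nth[of i a d] i pk by (simp add: p_def m_def)
    finally show "c ! (length c - m + i) = d ! i" .
  qed (use lp lq pk in \<open>auto simp: m_def\<close>)
  then show ?thesis using pk by (simp add: m_def k_def p_def q_def)
qed

lemma ov_suffix_mono: "suffix Y Z \<Longrightarrow> ov Z W \<le> ov Y W \<or> sublist Y W"
proof (cases "ov Z W = 0")
  case False
  assume s: "suffix Y Z"
  let ?m = "ov Z W"
  have l: "?m < length Z" "?m < length W" using ov_lt[OF False] by auto
  have ly: "length Y \<le> length Z" using s by (auto simp: suffix_nth)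
  show ?thesis
  proof (cases "length Y \<le> ?m")
    case True
    have "sublist Y W" unfolding sublist_nth
    proof (intro exI[of _ "?m - length Y"] conjI allI impI)
      fix j assume j: "j < length Y"
      have "W ! (?m - length Y + j) = Z ! (length Z - ?m + (?m - length Y + j))"
        using ov_nth[of "?m - length Y + j" Z W] j True by simp
      also have "\<dots> = Y ! j" by (rule suffixD[OF s j]) (use True l j in auto)
      finally show "W ! (?m - length Y + j) = Y ! j" .
    qed (use True l in auto)
    then show ?thesis by simp
  next
    case False
    have "?m \<le> ov Y W"
    proof (rule ov_geI)
      fix i assume i: "i < ?m"
      have "Y ! (length Y - ?m + i) = Z ! (length Z - ?m + i)"
        by (rule suffixD[OF s, symmetric]) (use False ly i in auto)
      also have "\<dots> = W ! i" using ov_nth[OF i] .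
      finally show "Y ! (length Y - ?m + i) = W ! i" .
    qed (use False l in auto)
    then show ?thesis by simp
  qed
qed simp

lemma ov_prefix_mono: "prefix X Z \<Longrightarrow> ov W Z \<le> ov W X \<or> sublist X W"
proof -
  assume "prefix X Z"
  then have "suffix (rc X) (rc Z)" by (auto simp: prefix_def suffix_def)
  from ov_suffix_mono[OF this, of "rc W"] show ?thesis
    using sublist_rc[of "rc X" "rc W"] by auto
qed

definition mrg2 :: "dna \<Rightarrow> dna \<Rightarrow> dna" where "mrg2 X Y = pref X Y @ Y"

lemma length_pref: "length (pref X Y) = length X - ov X Y" by (simp add: pref_def)
lemma length_mrg2: "length (mrg2 X Y) = length X - ov X Y + length Y" by (simp add: mrg2_def length_pref)

lemma mrg2_nth1: "n < length X \<Longrightarrow> mrg2 X Y ! n = X ! n"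
proof -
  assume n: "n < length X"
  show ?thesis
  proof (cases "n < length X - ov X Y")
    case True then show ?thesis by (simp add: mrg2_def pref_def nth_append)
  next
    case False
    have "mrg2 X Y ! n = Y ! (n - (length X - ov X Y))" using False by (simp add: mrg2_def pref_def nth_append)
    also have "\<dots> = X ! (length X - ov X Y + (n - (length X - ov X Y)))"
      using ov_nth[of "n - (length X - ov X Y)" X Y] False n by simp
    also have "length X - ov X Y + (n - (length X - ov X Y)) = n" using False by simp
    finally show ?thesis .
  qed
qed

lemma mrg2_nth2: "length X - ov X Y \<le> n \<Longrightarrow> mrg2 X Y ! n = Y ! (n - (length X - ov X Y))"
  by (simp add: mrg2_def pref_def nth_append ov_le1)

lemma prefix_mrg2: "prefix X (mrg2 X Y)"
  unfolding prefix_nth using mrg2_nth1[of _ X Y] ov_le2[of X Y] by (simp add: length_mrg2)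

lemma suffix_mrg2: "suffix Y (mrg2 X Y)" unfolding mrg2_def suffix_def by auto

lemma ov_mrg2_self:
  "ov (mrg2 X Y) (mrg2 X Y) \<le> ov Y X \<or> sublist Y X \<or> sublist X Y \<or> ov X Y < ov X X"
proof (cases "ov (mrg2 X Y) (mrg2 X Y) = 0")
  case False
  define Z where "Z = mrg2 X Y"
  define m where "m = ov Z Z"
  define s where "s = length X - ov X Y"
  have l: "m < length Z" using ov_lt False by (auto simp: m_def Z_def)
  have lZ: "length Z = s + length Y" by (simp add: Z_def s_def length_mrg2)
  have zx: "\<And>n. n < length X \<Longrightarrow> Z ! n = X ! n" by (simp add: Z_def mrg2_nth1)
  have zy: "\<And>n. s \<le> n \<Longrightarrow> Z ! n = Y ! (n - s)" by (simp add: Z_def s_def mrg2_nth2)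
  have zz: "\<And>i. i < m \<Longrightarrow> Z ! (length Z - m + i) = Z ! i" by (simp add: m_def ov_nth)
  have lX: "length X \<le> length Z" using lZ ov_le2[of X Y] by (simp add: s_def)
  consider "m < length Y" "m < length X" | "length Y \<le> m" "m < length X" | "m < length Y" "length X \<le> m"
    | "length Y \<le> m" "length X \<le> m" by linarith
  then show ?thesis
  proof cases
    case 1
    have "m \<le> ov Y X"
    proof (rule ov_geI)
      fix i assume i: "i < m"
      have "Y ! (length Y - m + i) = Z ! (length Z - m + i)" using zy[of "length Z - m + i"] 1 i lZ by simp
      also have "\<dots> = X ! i" using zz[OF i] zx[of i] i 1 by simp
      finally show "Y ! (length Y - m + i) = X ! i" .
    qed (use 1 in auto)
    then show ?thesis by (simp add: m_def Z_def)
  next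
    case 2
    have "sublist Y X" unfolding sublist_nth
    proof (intro exI[of _ "m - length Y"] conjI allI impI)
      fix j assume j: "j < length Y"
      have "X ! (m - length Y + j) = Z ! (m - length Y + j)" using zx[of "m - length Y + j"] 2 j by simp
      also have "\<dots> = Z ! (length Z - m + (m - length Y + j))" using zz[of "m - length Y + j"] 2 j by simp
      also have "length Z - m + (m - length Y + j) = s + j" using 2 l lZ j by simp
      also have "Z ! (s + j) = Y ! j" using zy[of "s + j"] by simp
      finally show "X ! (m - length Y + j) = Y ! j" .
    qed (use 2 in auto)
    then show ?thesis by simp
  next
    case 3
    have "sublist X Y" unfolding sublist_nth
    proof (intro exI[of _ "length Y - m"] conjI allI impI)
      fix j assume j: "j < length X"
      have "Y ! (length Y - m + j) = Z ! (length Z - m + j)" using zy[of "length Z - m + j"] 3 j lZ by simp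
      also have "\<dots> = Z ! j" using zz[of j] 3 j by simp
      also have "\<dots> = X ! j" using zx j by simp
      finally show "Y ! (length Y - m + j) = X ! j" .
    qed (use 3 in auto)
    then show ?thesis by simp
  next
    case 4
    define i where "i = length Z - m"
    have i1: "1 \<le> i" using l by (simp add: i_def)
    have occ: "\<And>j. j < length X \<Longrightarrow> Z ! (i + j) = X ! j"
      using zz zx 4 by (simp add: i_def)
    show ?thesis
    proof (cases "s \<le> i")
      case True
      have "sublist X Y" unfolding sublist_nth
      proof (intro exI[of _ "i - s"] conjI allI impI)
        fix j assume j: "j < length X"
        have "Y ! (i - s + j) = Z ! (i + j)" using zy[of "i + j"] True by simp
        then show "Y ! (i - s + j) = X ! j" using occ j by simp
      qed (use True 4 lZ l in \<open>auto simp: i_def\<close>)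
      then show ?thesis by simp
    next
      case False
      have "length X - i \<le> ov X X"
      proof (rule ov_geI)
        fix t assume t: "t < length X - i"
        have "X ! (length X - (length X - i) + t) = X ! (i + t)" using False t by (simp add: s_def)
        also have "\<dots> = Z ! (i + t)" using zx[of "i + t"] t by simp
        also have "\<dots> = Z ! t" using zz[of t] t 4 by (simp add: i_def)
        also have "\<dots> = X ! t" using zx t by simp
        finally show "X ! (length X - (length X - i) + t) = X ! t" .
      qed (use i1 False in \<open>auto simp: s_def\<close>)
      moreover have "ov X Y < length X - i" using False by (simp add: s_def)
      ultimately show ?thesis by simp
    qed
  qed
qed simp

lemma sublist_mrg2:
  "sublist W (mrg2 X Y) \<Longrightarrow> sublist W X \<or> sublist W Y \<or> sublist X W \<or> ov X Y < ov X W"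
proof -
  assume "sublist W (mrg2 X Y)"
  then obtain i where i: "i + length W \<le> length (mrg2 X Y)" "\<forall>j<length W. mrg2 X Y ! (i + j) = W ! j"
    unfolding sublist_nth by auto
  define s where "s = length X - ov X Y"
  have lZ: "length (mrg2 X Y) = s + length Y" by (simp add: s_def length_mrg2)
  show ?thesis
  proof (cases "i + length W \<le> length X")
    case True
    have "sublist W X" unfolding sublist_nth
      using True i mrg2_nth1[of "i + _" X Y] by (intro exI[of _ i]) auto
    then show ?thesis by simp
  next
    case nX: False
    show ?thesis
    proof (cases "s \<le> i")
      case True
      have "sublist W Y" unfolding sublist_nth
      proof (intro exI[of _ "i - s"] conjI allI impI)
        fix j assume j: "j < length W"
        show "Y ! (i - s + j) = W ! j" using mrg2_nth2[of X Y "i + j"] True i j by (simp add: s_def)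
      qed (use True i lZ in auto)
      then show ?thesis by simp
    next
      case False
      show ?thesis
      proof (cases "i = 0")
        case True
        have "sublist X W" unfolding sublist_nth
          using True i nX mrg2_nth1[of _ X Y] by (intro exI[of _ 0]) auto
        then show ?thesis by simp
      next
        case i0: False
        have "length X - i \<le> ov X W"
        proof (rule ov_geI)
          fix t assume t: "t < length X - i"
          have "X ! (length X - (length X - i) + t) = X ! (i + t)" using False t by (simp add: s_def)
          also have "\<dots> = mrg2 X Y ! (i + t)" using mrg2_nth1[of "i + t" X Y] t by simp
          also have "\<dots> = W ! t" using i t nX by simp
          finally show "X ! (length X - (length X - i) + t) = W ! t" .
        qed (use i0 nX False in \<open>auto simp: s_def\<close>)
        moreover have "ov X Y < length X - i" using False by (simp add: s_def)
        ultimately show ?thesis by simp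
      qed
    qed
  qed
qed

lemma rc_mrg2: "rc (mrg2 X Y) = mrg2 (rc Y) (rc X)"
proof (rule nth_equalityI)
  show "length (rc (mrg2 X Y)) = length (mrg2 (rc Y) (rc X))"
    using ov_le1[of X Y] ov_le2[of X Y] by (simp add: length_mrg2)
next
  fix n assume n: "n < length (rc (mrg2 X Y))"
  define k where "k = ov X Y"
  have kx: "k \<le> length X" "k \<le> length Y" by (simp_all add: k_def ov_le1 ov_le2)
  have lZ: "length (mrg2 X Y) = length X - k + length Y" by (simp add: length_mrg2 k_def)
  have lhs: "rc (mrg2 X Y) ! n = compl (mrg2 X Y ! (length (mrg2 X Y) - Suc n))" using n by (simp add: rc_nth)
  show "rc (mrg2 X Y) ! n = mrg2 (rc Y) (rc X) ! n"
  proof (cases "n < length Y")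
    case True
    have "mrg2 (rc Y) (rc X) ! n = rc Y ! n" using True by (simp add: mrg2_nth1)
    also have "\<dots> = compl (Y ! (length Y - Suc n))" using True by (simp add: rc_nth)
    also have "Y ! (length Y - Suc n) = mrg2 X Y ! (length (mrg2 X Y) - Suc n)"
      using mrg2_nth2[of X Y "length (mrg2 X Y) - Suc n"] True lZ by (simp add: k_def)
    finally show ?thesis using lhs by simp
  next
    case False
    have "mrg2 (rc Y) (rc X) ! n = rc X ! (n - (length Y - k))"
      using mrg2_nth2[of "rc Y" "rc X" n] False by (simp add: k_def)
    also have "\<dots> = compl (X ! (length X - Suc (n - (length Y - k))))"
      using n False kx lZ by (simp add: rc_nth)
    also have "X ! (length X - Suc (n - (length Y - k))) = mrg2 X Y ! (length (mrg2 X Y) - Suc n)"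
      using mrg2_nth1[of "length (mrg2 X Y) - Suc n" X Y] n False kx lZ
      by (simp add: k_def) (metis Suc_diff_Suc add.commute diff_diff_add diff_less_mono2 le_add_diff_inverse2 less_nat_zero_code not_less_eq zero_less_Suc)
    finally show ?thesis using lhs by simp
  qed
qed

lemma fst_rcI[simp]: "fst (rcI u) = rc (fst u)" by (simp add: rcI_def)
lemma snd_rcI[simp]: "snd (rcI u) = rev (map rc (snd u))" by (simp add: rcI_def)
lemma rcI_rcI[simp]: "rcI (rcI u) = u" by (simp add: rcI_def rev_map comp_def)
lemma rcI_inj: "rcI u = rcI v \<Longrightarrow> u = v" by (metis rcI_rcI)
lemma rcI_eq_iff: "rcI u = v \<longleftrightarrow> u = rcI v" by auto
lemma set_snd_rcI: "set (snd (rcI u)) = rc ` set (snd u)" by simp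
lemma hd_snd_rcI: "snd u \<noteq> [] \<Longrightarrow> hd (snd (rcI u)) = rc (last (snd u))"
  by (simp add: hd_rev last_map)
lemma last_snd_rcI: "snd u \<noteq> [] \<Longrightarrow> last (snd (rcI u)) = rc (hd (snd u))"
  by (simp add: last_rev hd_map)

lemma items_iff: "u \<in> items P \<longleftrightarrow> u \<in> P \<or> rcI u \<in> P"
  by (auto simp: items_def image_iff) (metis rcI_rcI)
lemma items_rcI: "u \<in> items P \<Longrightarrow> rcI u \<in> items P" unfolding items_iff rcI_rcI by blast
lemma items_diff: assumes "\<And>d. d \<in> D \<Longrightarrow> rcI d \<in> D" shows "items (P - D) = items P - D"
proof (rule set_eqI)
  fix u show "u \<in> items (P - D) \<longleftrightarrow> u \<in> items P - D"
    using assms[of "rcI u"] assms[of u] unfolding Diff_iff items_iff rcI_rcI by blast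
qed
lemma items_insert: "items (insert Z Q) = insert Z (insert (rcI Z) (items Q))"
  by (auto simp: items_iff)
lemma items_mono: "P \<subseteq> Q \<Longrightarrow> items P \<subseteq> items Q" by (auto simp: items_iff)

lemma items_diff2: "items (P - {x, rcI x}) = items P - {x, rcI x}"
  by (rule items_diff) auto
lemma items_diff4: "items (P - {x, rcI x, y, rcI y}) = items P - {x, rcI x, y, rcI y}"
  by (rule items_diff) auto

lemma vertices_rc: "v \<in> vertices S \<Longrightarrow> rc v \<in> vertices S"
  by (auto simp: vertices_def)

definition joinI :: "item \<Rightarrow> item \<Rightarrow> item" where
  "joinI x y = (mrg2 (fst x) (fst y), snd x @ snd y)"

lemma rcI_joinI: "rcI (joinI x y) = joinI (rcI y) (rcI x)"
  by (simp add: joinI_def rcI_def rc_mrg2)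

definition ovU :: "item \<Rightarrow> item \<Rightarrow> nat" where
  "ovU u v = ov (last (snd u)) (hd (snd v))"

lemma ovU_rcI: "snd u \<noteq> [] \<Longrightarrow> snd v \<noteq> [] \<Longrightarrow> ovU (rcI v) (rcI u) = ovU u v"
  by (simp add: ovU_def hd_snd_rcI last_snd_rcI del: snd_rcI)

lemma allowed_rcI: "allowed P x y \<Longrightarrow> allowed P (rcI y) (rcI x)"
  by (auto simp: allowed_def items_rcI)

lemma greedy_max_rcI: "greedy_max P x y \<Longrightarrow> greedy_max P (rcI y) (rcI x)"
  unfolding greedy_max_def using allowed_rcI by simp

definition goodI :: "dna set \<Rightarrow> item \<Rightarrow> bool" where
  "goodI S u \<longleftrightarrow> snd u \<noteq> [] \<and> prefix (hd (snd u)) (fst u) \<and> suffix (last (snd u)) (fst u) \<and>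
     set (snd u) \<subseteq> vertices S \<and> distinct (snd u) \<and> (\<forall>v\<in>set (snd u). rc v \<in> set (snd u) \<longrightarrow> rc v = v)"

definition sepI :: "item \<Rightarrow> item \<Rightarrow> bool" where
  "sepI u v \<longleftrightarrow> \<not> sublist (fst u) (fst v) \<and> set (snd u) \<inter> set (snd v) = {}"

definition ovI :: "item \<Rightarrow> item \<Rightarrow> bool" where
  "ovI u v \<longleftrightarrow> (ov (fst u) (fst v) \<noteq> 0 \<longrightarrow> ov (fst u) (fst v) < length (last (snd u)) \<and> ov (fst u) (fst v) < length (hd (snd v)))"

definition invP :: "dna set \<Rightarrow> item set \<Rightarrow> bool" where
  "invP S P \<longleftrightarrow> (\<forall>u\<in>items P. goodI S u) \<and>
     (\<forall>u\<in>items P. \<forall>v\<in>items P. v \<noteq> u \<and> v \<noteq> rcI u \<longrightarrow> sepI u v) \<and>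
     (\<forall>u\<in>items P. \<forall>v\<in>items P. (v = u \<or> v \<noteq> rcI u) \<longrightarrow> ovI u v)"

lemma invP_good: "invP S P \<Longrightarrow> u \<in> items P \<Longrightarrow> goodI S u" by (simp add: invP_def)
lemma invP_sep: "invP S P \<Longrightarrow> u \<in> items P \<Longrightarrow> v \<in> items P \<Longrightarrow> v \<noteq> u \<Longrightarrow> v \<noteq> rcI u \<Longrightarrow> sepI u v"
  by (simp add: invP_def)
lemma invP_ov: "invP S P \<Longrightarrow> u \<in> items P \<Longrightarrow> v \<in> items P \<Longrightarrow> v = u \<or> v \<noteq> rcI u \<Longrightarrow> ovI u v"
  unfolding invP_def by blast

lemma invP_mono: "invP S P \<Longrightarrow> Q \<subseteq> P \<Longrightarrow> invP S Q"
  unfolding invP_def using items_mono[of Q P] by blast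

lemma ovU_eq: "invP S P \<Longrightarrow> allowed P u v \<Longrightarrow> ovU u v = ov (fst u) (fst v)"
proof -
  assume i: "invP S P" and a: "allowed P u v"
  have uv: "u \<in> items P" "v \<in> items P" "v = u \<or> v \<noteq> rcI u" using a by (auto simp: allowed_def)
  have "goodI S u" "goodI S v" using i uv invP_good by auto
  moreover have "ovI u v" using invP_ov[OF i uv] .
  ultimately show ?thesis unfolding ovU_def goodI_def ovI_def
    by (intro ov_eq_ends) auto
qed

lemma greedy_ovU: "invP S P \<Longrightarrow> greedy_max P x y \<Longrightarrow> allowed P u v \<Longrightarrow> ovU u v \<le> ovU x y"
proof -
  assume i: "invP S P" and g: "greedy_max P x y" and a: "allowed P u v"
  have "ov (fst u) (fst v) \<le> ov (fst x) (fst y)" using g a unfolding greedy_max_def by blast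
  then show ?thesis using ovU_eq[OF i a] ovU_eq[OF i, of x y] g by (simp add: greedy_max_def)
qed

lemma join_core:
  assumes i: "invP S P" and g: "greedy_max P x y" and xy: "x \<noteq> y"
  shows "goodI S (joinI x y) \<and> ovI (joinI x y) (joinI x y) \<and> (\<forall>W\<in>items P - {x, rcI x, y, rcI y}. sepI (joinI x y) W \<and> sepI W (joinI x y) \<and>
         ovI (joinI x y) W \<and> ovI W (joinI x y))"
proof -
  have a: "allowed P x y" using g by (simp add: greedy_max_def)
  then have xI: "x \<in> items P" and yI: "y \<in> items P" and yx: "y \<noteq> rcI x"
    using xy by (auto simp: allowed_def)
  have xy': "x \<noteq> rcI y" using yx by auto
  have gx: "goodI S x" and gy: "goodI S y" using i xI yI invP_good by auto
  define X where "X = fst x"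
  define Y where "Y = fst y"
  define Z where "Z = mrg2 X Y"
  have fZ: "fst (joinI x y) = Z" and sZ: "snd (joinI x y) = snd x @ snd y"
    by (simp_all add: joinI_def Z_def X_def Y_def)
  have nex: "snd x \<noteq> []" and ney: "snd y \<noteq> []" using gx gy by (auto simp: goodI_def)
  have hdZ: "hd (snd (joinI x y)) = hd (snd x)" using sZ nex by simp
  have lastZ: "last (snd (joinI x y)) = last (snd y)" using sZ ney by simp
  have sxy: "sepI x y" using invP_sep[OF i xI yI] xy yx by auto
  have syx: "sepI y x" using invP_sep[OF i yI xI] xy xy' by auto
  have sxry: "sepI x (rcI y)" using invP_sep[OF i xI items_rcI[OF yI]] xy yx by (metis rcI_rcI)
  have syrx: "sepI y (rcI x)" using invP_sep[OF i yI items_rcI[OF xI]] xy xy' by (metis rcI_rcI)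
  have oyx: "ovI y x" using invP_ov[OF i yI xI] xy' by auto
  have gxx: "ov X X \<le> ov X Y"
  proof -
    have "allowed P x x" using xI by (auto simp: allowed_def)
    then show ?thesis using g unfolding greedy_max_def X_def Y_def by blast
  qed
  have pXZ: "prefix X Z" and sYZ: "suffix Y Z" by (simp_all add: Z_def prefix_mrg2 suffix_mrg2)
  have good: "goodI S (joinI x y)"
    unfolding goodI_def
  proof (intro conjI)
    show "snd (joinI x y) \<noteq> []" using sZ nex by simp
    show "prefix (hd (snd (joinI x y))) (fst (joinI x y))"
      using gx pXZ hdZ fZ unfolding goodI_def X_def by (metis prefix_order.trans)
    show "suffix (last (snd (joinI x y))) (fst (joinI x y))"
      using gy sYZ lastZ fZ unfolding goodI_def Y_def by (metis suffix_order.trans)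
    show "set (snd (joinI x y)) \<subseteq> vertices S" using gx gy sZ by (auto simp: goodI_def)
    show "distinct (snd (joinI x y))" using gx gy sZ sxy by (auto simp: goodI_def sepI_def)
    show "\<forall>v\<in>set (snd (joinI x y)). rc v \<in> set (snd (joinI x y)) \<longrightarrow> rc v = v"
    proof (intro ballI impI)
      fix v assume v: "v \<in> set (snd (joinI x y))" and rv: "rc v \<in> set (snd (joinI x y))"
      have "v \<in> set (snd x) \<and> rc v \<in> set (snd x) \<or> v \<in> set (snd y) \<and> rc v \<in> set (snd y)"
      proof -
        have c1: "\<not> (v \<in> set (snd x) \<and> rc v \<in> set (snd y))"
          using sxry unfolding sepI_def snd_rcI set_rev set_map by (metis IntI empty_iff imageI rc_rc)
        have c2: "\<not> (v \<in> set (snd y) \<and> rc v \<in> set (snd x))"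
          using syrx unfolding sepI_def snd_rcI set_rev set_map by (metis IntI empty_iff imageI rc_rc)
        show ?thesis using v rv sZ c1 c2 by auto
      qed
      then show "rc v = v" using gx gy by (auto simp: goodI_def)
    qed
  qed
  have oZZ: "ovI (joinI x y) (joinI x y)"
  proof -
    have "ov Z Z \<le> ov Y X" using ov_mrg2_self[of X Y] sxy syx gxx
      by (auto simp: sepI_def X_def Y_def Z_def)
    then show ?thesis using oyx hdZ lastZ fZ by (auto simp: ovI_def X_def Y_def)
  qed
  have Wp: "sepI (joinI x y) W \<and> sepI W (joinI x y) \<and> ovI (joinI x y) W \<and> ovI W (joinI x y)"
    if W: "W \<in> items P" "W \<notin> {x, rcI x, y, rcI y}" for W
  proof -
  have sxW: "sepI x W" using invP_sep[OF i xI W(1)] W(2) by (metis insertCI rcI_rcI)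
  have sWx: "sepI W x" using invP_sep[OF i W(1) xI] W(2) by (metis insertCI rcI_rcI)
  have syW: "sepI y W" using invP_sep[OF i yI W(1)] W(2) by (metis insertCI rcI_rcI)
  have sWy: "sepI W y" using invP_sep[OF i W(1) yI] W(2) by (metis insertCI rcI_rcI)
  have oyW: "ovI y W" using invP_ov[OF i yI W(1)] W(2) by (metis insertCI rcI_rcI)
  have oWx: "ovI W x" using invP_ov[OF i W(1) xI] W(2) by (metis insertCI rcI_rcI)
  have gxW: "ov X (fst W) \<le> ov X Y"
  proof -
    have "allowed P x W" using W xI by (auto simp: allowed_def)
    then show ?thesis using g unfolding greedy_max_def X_def Y_def by blast
  qed
  have nsZW: "\<not> sublist Z (fst W)"
  proof
    assume "sublist Z (fst W)"
    then have "sublist X (fst W)" using pXZ by (meson prefix_imp_sublist sublist_order.order.trans)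
    then show False using sxW by (simp add: sepI_def X_def)
  qed
  have nsWZ: "\<not> sublist (fst W) Z"
  proof
    assume "sublist (fst W) Z"
    from sublist_mrg2[OF this[unfolded Z_def]] show False
      using sWx sWy sxW gxW by (auto simp: sepI_def X_def Y_def)
  qed
  have oZW: "ovI (joinI x y) W"
  proof -
    have "ov Z (fst W) \<le> ov Y (fst W)" using ov_suffix_mono[OF sYZ, of "fst W"] syW
      by (auto simp: sepI_def Y_def)
    then show ?thesis using oyW lastZ fZ by (auto simp: ovI_def Y_def)
  qed
  have oWZ: "ovI W (joinI x y)"
  proof -
    have "ov (fst W) Z \<le> ov (fst W) X" using ov_prefix_mono[OF pXZ, of "fst W"] sxW
      by (auto simp: sepI_def X_def)
    then show ?thesis using oWx hdZ fZ by (auto simp: ovI_def X_def)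
  qed
    show ?thesis using nsZW nsWZ oZW oWZ sxW syW sWx sWy fZ sZ
      by (auto simp: sepI_def)
  qed
  show ?thesis using good oZZ Wp by blast
qed
lemma join_invP:
  assumes i: "invP S P" and g: "greedy_max P x y" and xy: "x \<noteq> y"
  shows "invP S (insert (joinI x y) (P - {x, rcI x, y, rcI y}))"
proof -
  define Z where "Z = joinI x y"
  define R where "R = items P - {x, rcI x, y, rcI y}"
  have it: "items (insert Z (P - {x, rcI x, y, rcI y})) = insert Z (insert (rcI Z) R)"
    by (simp add: items_insert items_diff4 R_def)
  have g': "greedy_max P (rcI y) (rcI x)" using greedy_max_rcI[OF g] .
  have xy': "rcI y \<noteq> rcI x" using xy rcI_inj by blast
  have R': "R = items P - {rcI y, rcI (rcI y), rcI x, rcI (rcI x)}" by (auto simp: R_def)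
  have c1: "\<And>W. W \<in> R \<Longrightarrow> sepI Z W \<and> sepI W Z \<and> ovI Z W \<and> ovI W Z"
    using join_core[OF i g xy] by (auto simp: R_def Z_def)
  have c2: "\<And>W. W \<in> R \<Longrightarrow> sepI (rcI Z) W \<and> sepI W (rcI Z) \<and> ovI (rcI Z) W \<and> ovI W (rcI Z)"
    using join_core[OF i g' xy'] unfolding R' by (auto simp: Z_def rcI_joinI)
  have gZ: "goodI S Z" "goodI S (rcI Z)" "ovI Z Z" "ovI (rcI Z) (rcI Z)"
    using join_core[OF i g xy] join_core[OF i g' xy'] by (auto simp: Z_def rcI_joinI)
  have RP: "R \<subseteq> items P" by (auto simp: R_def)
  show ?thesis unfolding invP_def Z_def[symmetric] it
  proof (intro conjI ballI impI)
    fix u assume "u \<in> insert Z (insert (rcI Z) R)"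
    then show "goodI S u" using gZ RP invP_good[OF i] by blast
  next
    fix u v assume u: "u \<in> insert Z (insert (rcI Z) R)" and v: "v \<in> insert Z (insert (rcI Z) R)"
      and uv: "v \<noteq> u \<and> v \<noteq> rcI u"
    from u v show "sepI u v"
    proof (elim insertE)
      assume "u \<in> R" "v \<in> R" then show ?thesis using uv RP invP_sep[OF i] by blast
    qed (use uv c1 c2 in auto)
  next
    fix u v assume u: "u \<in> insert Z (insert (rcI Z) R)" and v: "v \<in> insert Z (insert (rcI Z) R)"
      and uv: "v = u \<or> v \<noteq> rcI u"
    from u v show "ovI u v"
    proof (elim insertE)
      assume "u \<in> R" "v \<in> R" then show ?thesis using uv RP invP_ov[OF i] by blast
    qed (use uv c1 c2 gZ in auto)
  qed
qed

fun psum :: "('a \<Rightarrow> 'a \<Rightarrow> nat) \<Rightarrow> 'a list \<Rightarrow> nat" where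
  "psum f (a # b # l) = f a b + psum f (b # l)"
| "psum f _ = 0"

definition csum :: "('a \<Rightarrow> 'a \<Rightarrow> nat) \<Rightarrow> 'a list \<Rightarrow> nat" where
  "csum f l = (case l of [] \<Rightarrow> 0 | a # _ \<Rightarrow> psum f (l @ [a]))"

lemma psum_append: "l1 \<noteq> [] \<Longrightarrow> l2 \<noteq> [] \<Longrightarrow> psum f (l1 @ l2) = psum f l1 + f (last l1) (hd l2) + psum f l2"
proof (induction l1)
  case (Cons a l)
  show ?case
  proof (cases l)
    case Nil then show ?thesis using Cons.prems by (cases l2) auto
  next
    case (Cons b l') then show ?thesis using Cons.IH Cons.prems by auto
  qed
qed simp

lemma psum_snoc: "l \<noteq> [] \<Longrightarrow> psum f (l @ [a]) = psum f l + f (last l) a"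
  using psum_append[of l "[a]" f] by simp

lemma csum_nonempty: "l \<noteq> [] \<Longrightarrow> csum f l = psum f l + f (last l) (hd l)"
proof -
  assume "l \<noteq> []"
  then obtain a t where l: "l = a # t" by (cases l) auto
  have "psum f ((a # t) @ [a]) = psum f (a # t) + f (last (a # t)) a" by (rule psum_snoc) simp
  then show ?thesis using l by (simp add: csum_def)
qed

lemma csum_Nil[simp]: "csum f [] = 0" by (simp add: csum_def)

lemma csum_rotate: "csum f (l1 @ l2) = csum f (l2 @ l1)"
proof (cases "l1 = [] \<or> l2 = []")
  case True then show ?thesis by auto
next
  case False
  then show ?thesis by (simp add: csum_nonempty psum_append)
qed

lemma psum_add: "psum (\<lambda>a b. f a b + g a b) l = psum f l + psum g l"
  by (induction f l rule: psum.induct) auto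

lemma psum_cong: "(\<And>a b. a \<in> set l \<Longrightarrow> b \<in> set l \<Longrightarrow> f a b = g a b) \<Longrightarrow> psum f l = psum g l"
  by (induction f l rule: psum.induct) auto

lemma psum_map: "psum f (map h l) = psum (\<lambda>a b. f (h a) (h b)) l"
  by (induction "\<lambda>a b. f (h a) (h b)" l rule: psum.induct) auto

lemma psum_rev: "psum f (rev l) = psum (\<lambda>a b. f b a) l"
proof (induction l)
  case (Cons a l)
  show ?case
  proof (cases l)
    case Nil then show ?thesis by simp
  next
    case (Cons b l')
    have "psum f (rev (a # l)) = psum f (rev l @ [a])" by simp
    also have "\<dots> = psum f (rev l) + f (last (rev l)) a" using Cons by (intro psum_snoc) simp
    also have "last (rev l) = b" using Cons by (simp add: last_rev)
    finally show ?thesis using Cons.IH Cons by simp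
  qed
qed simp

lemma csum_rev_map: "csum f (rev (map h l)) = csum (\<lambda>a b. f (h b) (h a)) l"
proof (cases "l = []")
  case False
  have "csum f (rev (map h l)) = psum f (rev (map h l)) + f (last (rev (map h l))) (hd (rev (map h l)))"
    using False by (simp add: csum_nonempty)
  also have "psum f (rev (map h l)) = psum (\<lambda>a b. f (h b) (h a)) l" by (simp add: psum_rev psum_map)
  also have "last (rev (map h l)) = h (hd l)" using False by (simp add: last_rev hd_map)
  also have "hd (rev (map h l)) = h (last l)" using False by (simp add: hd_rev last_map)
  finally show ?thesis using False by (simp add: csum_nonempty)
qed simp

lemma csum_cong: "(\<And>a b. a \<in> set l \<Longrightarrow> b \<in> set l \<Longrightarrow> f a b = g a b) \<Longrightarrow> csum f l = csum g l"
  by (cases "l = []") (auto simp: csum_nonempty intro!: psum_cong)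

lemma csum_map: "csum f (map h l) = csum (\<lambda>a b. f (h a) (h b)) l"
  by (cases "l = []") (auto simp: csum_nonempty psum_map hd_map last_map)

lemma psum_len1: "l \<noteq> [] \<Longrightarrow> psum (\<lambda>a b. length a) l + length (last l) = sum_list (map length l)"
  by (induction l rule: induct_list012) auto

lemma psum_len2: "l \<noteq> [] \<Longrightarrow> psum (\<lambda>a b. length b) l + length (hd l) = sum_list (map length l)"
  by (induction l rule: induct_list012) auto

lemma dst_ov: "dst a b + ov a b = length a" by (simp add: dst_def ov_le1)

lemma psum_dst_ov: "psum dst l + psum ov l = psum (\<lambda>a b. length a) l"
  using psum_add[of dst ov l] by (simp add: dst_ov)

lemma csum_dst_ov: "csum dst l + csum ov l = sum_list (map length l)"
proof (cases "l = []")
  case False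
  have "csum dst l + csum ov l = psum dst l + psum ov l + (dst (last l) (hd l) + ov (last l) (hd l))"
    using False by (simp add: csum_nonempty)
  also have "\<dots> = sum_list (map length l)" using psum_len1[OF False] by (simp add: psum_dst_ov dst_ov)
  finally show ?thesis .
qed simp

lemma cyc_weight_csum: "cyc_weight zs = csum dst zs"
proof (cases "zs = []")
  case True then show ?thesis by (simp add: cyc_weight_def)
next
  case False
  have ps: "psum f l = (\<Sum>i<length l - 1. f (l ! i) (l ! Suc i))" for f :: "dna \<Rightarrow> dna \<Rightarrow> nat" and l
  proof (induction f l rule: psum.induct)
    case (1 f a b l)
    have "(\<Sum>i<length (a # b # l) - 1. f ((a # b # l) ! i) ((a # b # l) ! Suc i))
        = f a b + (\<Sum>i<length (b # l) - 1. f ((b # l) ! i) ((b # l) ! Suc i))"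
      by (simp add: sum.lessThan_Suc_shift del: sum.lessThan_Suc)
    then show ?case using 1 by simp
  qed auto
  obtain m where m: "length zs = Suc m" using False by (cases zs) auto
  have "cyc_weight zs = (\<Sum>i<Suc m. dst (zs ! i) (zs ! ((i + 1) mod Suc m)))"
    by (simp add: cyc_weight_def m)
  also have "\<dots> = (\<Sum>i<m. dst (zs ! i) (zs ! Suc i)) + dst (zs ! m) (zs ! 0)"
    by (simp add: sum.lessThan_Suc del: mod_Suc)
  finally have cw: "cyc_weight zs = (\<Sum>i<m. dst (zs ! i) (zs ! Suc i)) + dst (zs ! m) (zs ! 0)" by simp
  have "zs ! m = last zs" using m False by (simp add: last_conv_nth)
  moreover have "zs ! 0 = hd zs" using False by (simp add: hd_conv_nth)
  ultimately show ?thesis using cw ps[of dst zs] m False by (simp add: csum_nonempty)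
qed

lemma length_pref_dst: "length (pref x y) = dst x y" by (simp add: pref_def dst_def ov_le1)

lemma length_mrg: "l \<noteq> [] \<Longrightarrow> length (mrg l) = psum dst l + length (last l)"
  by (induction l rule: mrg.induct) (auto simp: length_pref_dst)

definition Lu :: "item \<Rightarrow> nat" where
  "Lu u = psum dst (snd u) + length (last (snd u))"

lemma Lu_rcI: "Lu (rcI u) = Lu u"
proof (cases "snd u = []")
  case True then show ?thesis by (simp add: Lu_def)
next
  case False
  define l where "l = snd u"
  have ne: "l \<noteq> []" using False by (simp add: l_def)
  have "psum dst (rev (map rc l)) = psum (\<lambda>a b. dst (rc b) (rc a)) l" by (simp add: psum_rev psum_map)
  also have "\<dots> = psum (\<lambda>a b. length b - ov a b) l" by (simp add: dst_def)
  finally have e1: "psum dst (rev (map rc l)) = psum (\<lambda>a b. length b - ov a b) l" .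
  have e2: "psum (\<lambda>a b. length b - ov a b) l + psum ov l = psum (\<lambda>a b. length b) l"
    using psum_add[of "\<lambda>a b. length b - ov a b" ov l] by (simp add: ov_le2)
  have "Lu (rcI u) + psum ov l = psum (\<lambda>a b. length b) l + length (hd l)"
    using e1 e2 ne by (simp add: Lu_def l_def last_rev hd_map)
  also have "\<dots> = sum_list (map length l)" using psum_len2[OF ne] .
  also have "\<dots> = Lu u + psum ov l" using psum_len1[OF ne] psum_dst_ov[of l] by (simp add: Lu_def l_def)
  finally show ?thesis by simp
qed

lemma Lu_join: "snd x \<noteq> [] \<Longrightarrow> snd y \<noteq> [] \<Longrightarrow> Lu (joinI x y) + ovU x y = Lu x + Lu y"
  by (simp add: Lu_def joinI_def ovU_def psum_append) (metis add.assoc add.commute dst_ov)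

lemma Lu_close: "snd x \<noteq> [] \<Longrightarrow> cyc_weight (snd x) + ovU x x = Lu x"
  by (simp add: cyc_weight_csum csum_nonempty Lu_def ovU_def) (metis add.assoc dst_ov)

definition goodset :: "item set \<Rightarrow> item set \<Rightarrow> bool" where
  "goodset P Q \<longleftrightarrow> Q \<subseteq> items P \<and> (\<forall>p\<in>P. p \<in> Q \<or> rcI p \<in> Q) \<and> (\<forall>u\<in>Q. rcI u \<in> Q \<longrightarrow> rcI u = u)"

definition wfU :: "item set \<Rightarrow> item list list \<Rightarrow> bool" where
  "wfU P U \<longleftrightarrow> (\<forall>A\<in>set U. A \<noteq> []) \<and> distinct (concat U) \<and> goodset P (set (concat U))"

definition sumL :: "item list list \<Rightarrow> nat" where "sumL U = sum_list (map Lu (concat U))"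
definition sumO :: "item list list \<Rightarrow> nat" where "sumO U = sum_list (map (csum ovU) U)"

definition impr :: "item set \<Rightarrow> item list list \<Rightarrow> item list list \<Rightarrow> bool" where
  "impr P U U' \<longleftrightarrow> wfU P U' \<and> sumL U' = sumL U \<and> sumO U \<le> sumO U'"

lemma sumL_Cons[simp]: "sumL (A # U) = sum_list (map Lu A) + sumL U" by (simp add: sumL_def)
lemma sumO_Cons[simp]: "sumO (A # U) = csum ovU A + sumO U" by (simp add: sumO_def)
lemma sumL_Nil[simp]: "sumL [] = 0" by (simp add: sumL_def)
lemma sumO_Nil[simp]: "sumO [] = 0" by (simp add: sumO_def)

lemma impr_refl: "wfU P U \<Longrightarrow> impr P U U" by (simp add: impr_def)
lemma impr_trans: "impr P U1 U2 \<Longrightarrow> impr P U2 U3 \<Longrightarrow> impr P U1 U3" by (auto simp: impr_def)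

lemma sum_list_map_mset: fixes f :: "'a \<Rightarrow> 'b::comm_monoid_add" shows "mset xs = mset ys \<Longrightarrow> sum_list (map f xs) = sum_list (map f ys)"
proof -
  assume m: "mset xs = mset ys"
  have "sum_list (map f xs) = sum_mset (mset (map f xs))" by (rule sum_mset_sum_list[symmetric])
  also have "\<dots> = sum_mset (mset (map f ys))" using m by simp
  also have "\<dots> = sum_list (map f ys)" by (rule sum_mset_sum_list)
  finally show ?thesis .
qed

lemma wfU_mset:
  assumes "wfU P U" "\<forall>A\<in>set U'. A \<noteq> []" "mset (concat U') = mset (concat U)"
  shows "wfU P U'"
proof -
  have "set (concat U') = set (concat U)" using assms(3) by (metis mset_eq_setD)
  moreover have "distinct (concat U')" using assms(1) mset_eq_imp_distinct_iff[OF assms(3)] by (simp add: wfU_def)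
  ultimately show ?thesis using assms by (simp add: wfU_def)
qed

lemma sumL_mset: "mset (concat U') = mset (concat U) \<Longrightarrow> sumL U' = sumL U"
  unfolding sumL_def by (rule sum_list_map_mset)

lemma E_perm: "wfU P U \<Longrightarrow> mset U' = mset U \<Longrightarrow> impr P U U'"
proof -
  assume w: "wfU P U" and m: "mset U' = mset U"
  have mc: "mset (concat U') = mset (concat U)" unfolding mset_concat using sum_list_map_mset[OF m, of mset] .
  have ne: "\<forall>A\<in>set U'. A \<noteq> []" using w m by (auto simp: wfU_def dest: mset_eq_setD)
  have "sumO U' = sumO U" unfolding sumO_def by (rule sum_list_map_mset[OF m])
  then show ?thesis using wfU_mset[OF w ne mc] sumL_mset[OF mc]
    by (simp add: impr_def)
qed

lemma E_rot: "wfU P ((l1 @ l2) # rest) \<Longrightarrow> impr P ((l1 @ l2) # rest) ((l2 @ l1) # rest)"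
proof -
  assume w: "wfU P ((l1 @ l2) # rest)"
  have mc: "mset (concat ((l2 @ l1) # rest)) = mset (concat ((l1 @ l2) # rest))" by simp
  have "\<forall>A\<in>set ((l2 @ l1) # rest). A \<noteq> []" using w by (auto simp: wfU_def)
  moreover have "sumO ((l2 @ l1) # rest) = sumO ((l1 @ l2) # rest)"
    by (simp only: sumO_Cons csum_rotate[of ovU l2 l1])
  ultimately show ?thesis using wfU_mset[OF w _ mc] sumL_mset[OF mc]
    by (simp add: impr_def)
qed

lemma wfU_revseg:
  assumes w: "wfU P ((A @ B) # rest)"
  shows "wfU P ((rev (map rcI A) @ B) # rest)"
proof -
  let ?Q = "set (concat ((A @ B) # rest))"
  let ?C = "set B \<union> set (concat rest)"
  have d: "distinct A" "distinct (B @ concat rest)" "set A \<inter> ?C = {}"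
    using w by (auto simp: wfU_def)
  have g: "goodset P ?Q" using w by (simp add: wfU_def)
  have Q: "?Q = set A \<union> ?C" by auto
  have pal: "\<And>u. u \<in> ?Q \<Longrightarrow> rcI u \<in> ?Q \<Longrightarrow> rcI u = u" using g unfolding goodset_def by blast
  have rA: "\<And>a. a \<in> set A \<Longrightarrow> rcI a \<notin> ?C"
  proof
    fix a assume a: "a \<in> set A" and ra: "rcI a \<in> ?C"
    then have "rcI a = a" using pal[of a] by auto
    then show False using a ra d(3) by auto
  qed
  have dist: "distinct (rev (map rcI A) @ B @ concat rest)"
    using d rA by (auto simp: distinct_map inj_on_def dest: rcI_inj)
  have sub: "rcI ` set A \<union> ?C \<subseteq> items P" using g Q by (auto simp: goodset_def items_rcI)
  have cov: "\<forall>p\<in>P. p \<in> rcI ` set A \<union> ?C \<or> rcI p \<in> rcI ` set A \<union> ?C"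
  proof
    fix p assume "p \<in> P"
    then have "p \<in> ?Q \<or> rcI p \<in> ?Q" using g by (simp add: goodset_def)
    then show "p \<in> rcI ` set A \<union> ?C \<or> rcI p \<in> rcI ` set A \<union> ?C"
      using Q by (auto simp: image_iff) (metis rcI_rcI)+
  qed
  have pal': "\<forall>u\<in>rcI ` set A \<union> ?C. rcI u \<in> rcI ` set A \<union> ?C \<longrightarrow> rcI u = u"
  proof (intro ballI impI)
    fix u assume u: "u \<in> rcI ` set A \<union> ?C" and ru: "rcI u \<in> rcI ` set A \<union> ?C"
    show "rcI u = u"
    proof (cases "u \<in> ?C")
      case True
      have "rcI u \<notin> rcI ` set A"
      proof
        assume "rcI u \<in> rcI ` set A"
        then have "u \<in> set A" by (auto dest: rcI_inj)
        with True d(3) show False by auto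
      qed
      then have "rcI u \<in> ?C" using ru by auto
      then show ?thesis using pal[of u] True by auto
    next
      case False
      then obtain a where a: "a \<in> set A" "u = rcI a" using u by auto
      have "a \<in> rcI ` set A" using ru a d(3) by auto
      then obtain a' where a': "a' \<in> set A" "a = rcI a'" by auto
      then have "rcI a = a" using pal[of a] a by auto
      then show ?thesis using a by simp
    qed
  qed
  have ne: "\<forall>X\<in>set ((rev (map rcI A) @ B) # rest). X \<noteq> []" using w by (auto simp: wfU_def)
  have "set (concat ((rev (map rcI A) @ B) # rest)) = rcI ` set A \<union> ?C" by auto
  then show ?thesis using ne dist sub cov pal' by (simp add: wfU_def goodset_def)
qed

lemma wf_items: "wfU P U \<Longrightarrow> u \<in> set (concat U) \<Longrightarrow> u \<in> items P"
  by (auto simp: wfU_def goodset_def)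

lemma wf_snd: "invP S P \<Longrightarrow> wfU P U \<Longrightarrow> u \<in> set (concat U) \<Longrightarrow> snd u \<noteq> []"
  using wf_items invP_good by (fastforce simp: goodI_def)

lemma allowed_in: "wfU P U \<Longrightarrow> u \<in> set (concat U) \<Longrightarrow> v \<in> set (concat U) \<Longrightarrow> allowed P u v"
proof -
  assume w: "wfU P U" and u: "u \<in> set (concat U)" and v: "v \<in> set (concat U)"
  have g: "goodset P (set (concat U))" using w by (simp add: wfU_def)
  then have "u \<in> items P" "v \<in> items P" using u v by (auto simp: goodset_def)
  moreover have "rcI u = v \<longrightarrow> rcI u = u" using g u v unfolding goodset_def by blast
  ultimately show ?thesis unfolding allowed_def by auto
qed

lemma E_rev:
  assumes i: "invP S P" and w: "wfU P (A # rest)"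
  shows "impr P (A # rest) (rev (map rcI A) # rest)"
proof -
  have w': "wfU P (rev (map rcI A) # rest)" using wfU_revseg[of P A "[]" rest] w by simp
  have "sum_list (map Lu (rev (map rcI A))) = sum_list (map Lu A)"
    by (simp add: rev_map[symmetric] Lu_rcI comp_def)
  moreover have "csum ovU (rev (map rcI A)) = csum ovU A"
  proof -
    have "csum ovU (rev (map rcI A)) = csum (\<lambda>a b. ovU (rcI b) (rcI a)) A" by (rule csum_rev_map)
    also have "\<dots> = csum ovU A"
      using wf_snd[OF i w] by (intro csum_cong) (auto simp: ovU_rcI)
    finally show ?thesis .
  qed
  ultimately show ?thesis using w' by (simp add: impr_def)
qed

lemma monge_U: "ovU a d \<le> ovU a b \<Longrightarrow> ovU c b \<le> ovU a b \<Longrightarrow> ovU a d + ovU c b \<le> ovU a b + ovU c d"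
  unfolding ovU_def by (rule monge)

lemma X1:
  assumes w: "wfU P ((x # R1 @ y # R2) # rest)" and R1: "R1 \<noteq> []"
    and mg: "ovU x (hd R1) + ovU (last R1) y \<le> ovU x y + ovU (last R1) (hd R1)"
  shows "impr P ((x # R1 @ y # R2) # rest) ((x # y # R2) # R1 # rest)"
proof -
  have mc: "mset (concat ((x # y # R2) # R1 # rest)) = mset (concat ((x # R1 @ y # R2) # rest))" by simp
  have ne: "\<forall>A\<in>set ((x # y # R2) # R1 # rest). A \<noteq> []" using w R1 by (auto simp: wfU_def)
  have c1: "csum ovU (x # R1 @ y # R2) = ovU x (hd R1) + psum ovU R1 + ovU (last R1) y + psum ovU (y # R2) + ovU (last (y # R2)) x"
    using R1 psum_append[of "[x]" "R1 @ y # R2" ovU] psum_append[of R1 "y # R2" ovU]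
    by (simp add: csum_nonempty)
  have c2: "csum ovU (x # y # R2) = ovU x y + psum ovU (y # R2) + ovU (last (y # R2)) x"
    by (simp add: csum_nonempty)
  have c3: "csum ovU R1 = psum ovU R1 + ovU (last R1) (hd R1)" using R1 by (simp add: csum_nonempty)
  show ?thesis using wfU_mset[OF w ne mc] sumL_mset[OF mc] c1 c2 c3 mg by (simp add: impr_def)
qed

lemma X2:
  assumes w: "wfU P ((x # R) # (y # T) # rest)"
    and mg: "ovU x (hd (R @ [x])) + ovU (last (y # T)) y \<le> ovU x y + ovU (last (y # T)) (hd (R @ [x]))"
  shows "impr P ((x # R) # (y # T) # rest) ((x # y # T @ R) # rest)"
proof -
  have mc: "mset (concat ((x # y # T @ R) # rest)) = mset (concat ((x # R) # (y # T) # rest))" by simp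
  have ne: "\<forall>A\<in>set ((x # y # T @ R) # rest). A \<noteq> []" using w by (auto simp: wfU_def)
  have "csum ovU (x # R) + csum ovU (y # T) \<le> csum ovU (x # y # T @ R)"
  proof (cases "R = []")
    case True
    then show ?thesis using mg by (simp add: csum_nonempty)
  next
    case False
    have c1: "csum ovU (x # R) = ovU x (hd R) + psum ovU R + ovU (last R) x"
      using False psum_append[of "[x]" R ovU] by (simp add: csum_nonempty)
    have c2: "csum ovU (x # y # T @ R) = ovU x y + psum ovU (y # T) + ovU (last (y # T)) (hd R) + psum ovU R + ovU (last R) x"
      using False psum_append[of "[x]" "y # T @ R" ovU] psum_append[of "y # T" R ovU]
      by (simp add: csum_nonempty)
    show ?thesis using False c1 c2 mg by (simp add: csum_nonempty)
  qed
  then show ?thesis using wfU_mset[OF w ne mc] sumL_mset[OF mc] by (simp add: impr_def)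
qed

lemma X4:
  assumes w: "wfU P ((x # R) # rest)" and R: "R \<noteq> []"
    and mg: "ovU x (hd R) + ovU (last R) x \<le> ovU x x + ovU (last R) (hd R)"
  shows "impr P ((x # R) # rest) ([x] # R # rest)"
proof -
  have mc: "mset (concat ([x] # R # rest)) = mset (concat ((x # R) # rest))" by simp
  have ne: "\<forall>A\<in>set ([x] # R # rest). A \<noteq> []" using w R by (auto simp: wfU_def)
  have c1: "csum ovU (x # R) = ovU x (hd R) + psum ovU R + ovU (last R) x"
    using R psum_append[of "[x]" R ovU] by (simp add: csum_nonempty)
  have c3: "csum ovU R = psum ovU R + ovU (last R) (hd R)" using R by (simp add: csum_nonempty)
  show ?thesis using wfU_mset[OF w ne mc] sumL_mset[OF mc] c1 c3 mg by (simp add: impr_def csum_nonempty)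
qed

lemma X3:
  assumes i: "invP S P" and w: "wfU P ((x # seg @ rest1) # rest)" and seg: "seg \<noteq> []"
    and ly: "last seg = rcI y" and yI: "y \<in> items P"
    and mg: "ovU x (hd seg) + ovU (rcI (hd (rest1 @ [x]))) y \<le> ovU x y + ovU (rcI (hd (rest1 @ [x]))) (hd seg)"
  shows "impr P ((x # seg @ rest1) # rest) ((x # rev (map rcI seg) @ rest1) # rest)"
proof -
  define T where "T = rest1 @ [x]"
  define e where "e = hd T"
  have T: "T \<noteq> []" "last T = x" by (simp_all add: T_def)
  have mc1: "mset (concat ((seg @ T) # rest)) = mset (concat ((x # seg @ rest1) # rest))" by (simp add: T_def)
  have w1: "wfU P ((seg @ T) # rest)" using wfU_mset[OF w _ mc1] w seg by (auto simp: wfU_def)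
  have w2: "wfU P ((rev (map rcI seg) @ T) # rest)" by (rule wfU_revseg[OF w1])
  have mc2: "mset (concat ((x # rev (map rcI seg) @ rest1) # rest)) = mset (concat ((rev (map rcI seg) @ T) # rest))"
    by (simp add: T_def)
  have ne3: "\<forall>A\<in>set ((x # rev (map rcI seg) @ rest1) # rest). A \<noteq> []" using w by (auto simp: wfU_def)
  have w3: "wfU P ((x # rev (map rcI seg) @ rest1) # rest)" using wfU_mset[OF w2 ne3 mc2] .
  have inQ: "\<And>u. u \<in> set seg \<Longrightarrow> u \<in> set (concat ((x # seg @ rest1) # rest))" by simp
  have sne: "\<And>u. u \<in> set seg \<Longrightarrow> snd u \<noteq> []" using wf_snd[OF i w] inQ by blast
  have eQ: "e \<in> set (concat ((x # seg @ rest1) # rest))" by (cases rest1) (auto simp: e_def T_def)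
  have ene: "snd e \<noteq> []" using wf_snd[OF i w eQ] .
  have yne: "snd y \<noteq> []" using invP_good[OF i yI] by (simp add: goodI_def)
  have Lsame: "sum_list (map Lu (rev (map rcI seg))) = sum_list (map Lu seg)"
    by (simp add: rev_map[symmetric] Lu_rcI comp_def)
  have ps: "psum ovU (rev (map rcI seg)) = psum ovU seg"
  proof -
    have "psum ovU (rev (map rcI seg)) = psum (\<lambda>a b. ovU (rcI b) (rcI a)) seg" by (simp add: psum_rev psum_map)
    also have "\<dots> = psum ovU seg" using sne by (intro psum_cong) (auto simp: ovU_rcI)
    finally show ?thesis .
  qed
  have hs: "hd (rev (map rcI seg)) = y" using seg ly by (simp add: hd_rev last_map)
  have ls: "last (rev (map rcI seg)) = rcI (hd seg)" using seg by (simp add: last_rev hd_map)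
  have sy1: "ovU (rcI y) e = ovU (rcI e) y" using ovU_rcI[of "rcI e" y] ene yne by simp
  have sy2: "ovU (rcI (hd seg)) e = ovU (rcI e) (hd seg)" using ovU_rcI[of "rcI e" "hd seg"] ene sne[of "hd seg"] seg by simp
  have old: "csum ovU (x # seg @ rest1) = psum ovU seg + ovU (rcI y) e + psum ovU T + ovU x (hd seg)"
  proof -
    have "csum ovU (x # seg @ rest1) = csum ovU ([x] @ (seg @ rest1))" by simp
    also have "\<dots> = csum ovU (seg @ T)" using csum_rotate[of ovU "[x]" "seg @ rest1"] by (simp add: T_def)
    also have "\<dots> = psum ovU seg + ovU (rcI y) e + psum ovU T + ovU x (hd seg)"
      using seg T ly by (simp add: csum_nonempty psum_append e_def)
    finally show ?thesis .
  qed
  have new: "csum ovU (x # rev (map rcI seg) @ rest1) = psum ovU seg + ovU (rcI (hd seg)) e + psum ovU T + ovU x y"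
  proof -
    have "csum ovU (x # rev (map rcI seg) @ rest1) = csum ovU ([x] @ (rev (map rcI seg) @ rest1))" by simp
    also have "\<dots> = csum ovU (rev (map rcI seg) @ T)" using csum_rotate[of ovU "[x]" "rev (map rcI seg) @ rest1"] by (simp add: T_def)
    also have "\<dots> = psum ovU seg + ovU (rcI (hd seg)) e + psum ovU T + ovU x y"
      using seg T hs ls ps by (simp add: csum_nonempty psum_append e_def)
    finally show ?thesis .
  qed
  show ?thesis using w3 Lsame old new sy1 sy2 mg by (simp add: impr_def e_def T_def)
qed

lemma mset_front: "A \<in> set U \<Longrightarrow> mset (A # remove1 A U) = mset U"
  by simp

lemma cover_or_rc: "wfU P U \<Longrightarrow> u \<in> items P \<Longrightarrow> u \<in> set (concat U) \<or> rcI u \<in> set (concat U)"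
proof -
  assume w: "wfU P U" and u: "u \<in> items P"
  have c: "\<forall>p\<in>P. p \<in> set (concat U) \<or> rcI p \<in> set (concat U)" using w by (simp add: wfU_def goodset_def)
  from u have "u \<in> P \<or> rcI u \<in> P" by (simp add: items_iff)
  then show ?thesis using c[rule_format, of u] c[rule_format, of "rcI u"] by auto
qed

lemma orient:
  assumes i: "invP S P" and w: "wfU P U" and u: "u \<in> items P"
  shows "\<exists>U'. impr P U U' \<and> u \<in> set (concat U')"
proof (cases "u \<in> set (concat U)")
  case True then show ?thesis using impr_refl[OF w] by blast
next
  case False
  then have "rcI u \<in> set (concat U)" using cover_or_rc[OF w u] by simp
  then obtain A where A: "A \<in> set U" "rcI u \<in> set A" by auto
  have i1: "impr P U (A # remove1 A U)" using E_perm[OF w mset_front[OF A(1)]] .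
  then have w1: "wfU P (A # remove1 A U)" by (simp add: impr_def)
  have i2: "impr P (A # remove1 A U) (rev (map rcI A) # remove1 A U)" by (rule E_rev[OF i w1])
  have "u \<in> set (concat (rev (map rcI A) # remove1 A U))" using A(2) by (auto simp: image_iff) (metis rcI_rcI)
  then show ?thesis using impr_trans[OF i1 i2] by blast
qed

lemma front:
  assumes w: "wfU P U" and x: "x \<in> set (concat U)"
  shows "\<exists>R rest. impr P U ((x # R) # rest)"
proof -
  obtain A where A: "A \<in> set U" "x \<in> set A" using x by auto
  obtain l1 l2 where l: "A = l1 @ x # l2" using split_list[OF A(2)] by blast
  have i1: "impr P U (A # remove1 A U)" using E_perm[OF w mset_front[OF A(1)]] .
  then have w1: "wfU P ((l1 @ (x # l2)) # remove1 A U)" by (simp add: impr_def l)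
  have i2: "impr P ((l1 @ (x # l2)) # remove1 A U) (((x # l2) @ l1) # remove1 A U)" by (rule E_rot[OF w1])
  show ?thesis using impr_trans[OF i1 i2[folded l]] by auto
qed

lemma front2:
  assumes w: "wfU P (C # rest)" and y: "y \<in> set (concat rest)"
  shows "\<exists>T rest'. impr P (C # rest) (C # (y # T) # rest')"
proof -
  obtain B where B: "B \<in> set rest" "y \<in> set B" using y by auto
  obtain l1 l2 where l: "B = l1 @ y # l2" using split_list[OF B(2)] by blast
  have m1: "mset (B # C # remove1 B rest) = mset (C # rest)" using B(1) by simp
  have i1: "impr P (C # rest) (B # C # remove1 B rest)" using E_perm[OF w m1] .
  then have w1: "wfU P ((l1 @ (y # l2)) # C # remove1 B rest)" by (simp add: impr_def l)
  have i2: "impr P ((l1 @ (y # l2)) # C # remove1 B rest) (((y # l2) @ l1) # C # remove1 B rest)" by (rule E_rot[OF w1])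
  have i12: "impr P (C # rest) (((y # l2) @ l1) # C # remove1 B rest)" using impr_trans[OF i1 i2[folded l]] .
  then have w2: "wfU P (((y # l2) @ l1) # C # remove1 B rest)" by (simp add: impr_def)
  have m3: "mset (C # ((y # l2) @ l1) # remove1 B rest) = mset (((y # l2) @ l1) # C # remove1 B rest)" by simp
  have i3: "impr P (((y # l2) @ l1) # C # remove1 B rest) (C # ((y # l2) @ l1) # remove1 B rest)" using E_perm[OF w2 m3] .
  show ?thesis using impr_trans[OF i12 i3] by auto
qed

lemma flip_tail:
  assumes i: "invP S P" and w: "wfU P (C # rest)" and v: "v \<in> set (concat rest)"
  shows "\<exists>rest'. impr P (C # rest) (C # rest') \<and> rcI v \<in> set (concat rest')"
proof -
  obtain B where B: "B \<in> set rest" "v \<in> set B" using v by auto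
  have m1: "mset (B # C # remove1 B rest) = mset (C # rest)" using B(1) by simp
  have i1: "impr P (C # rest) (B # C # remove1 B rest)" using E_perm[OF w m1] .
  then have w1: "wfU P (B # C # remove1 B rest)" by (simp add: impr_def)
  have i2: "impr P (B # C # remove1 B rest) (rev (map rcI B) # C # remove1 B rest)" by (rule E_rev[OF i w1])
  have i12: "impr P (C # rest) (rev (map rcI B) # C # remove1 B rest)" using impr_trans[OF i1 i2] .
  then have w2: "wfU P (rev (map rcI B) # C # remove1 B rest)" by (simp add: impr_def)
  have m3: "mset (C # rev (map rcI B) # remove1 B rest) = mset (rev (map rcI B) # C # remove1 B rest)" by simp
  have i3: "impr P (rev (map rcI B) # C # remove1 B rest) (C # rev (map rcI B) # remove1 B rest)" using E_perm[OF w2 m3] .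
  have "rcI v \<in> set (concat (rev (map rcI B) # remove1 B rest))" using B(2) by simp
  then show ?thesis using impr_trans[OF i12 i3] by blast
qed

lemma wf_allowed_le:
  assumes i: "invP S P" and g: "greedy_max P x y" and w: "wfU P U"
    and u: "u \<in> set (concat U)" and v: "v \<in> set (concat U)"
  shows "ovU u v \<le> ovU x y"
  using greedy_ovU[OF i g allowed_in[OF w u v]] .

lemma join_tail:
  assumes i: "invP S P" and g: "greedy_max P x y" and w: "wfU P ((x # R) # rest)"
    and y: "y \<in> set (concat rest)"
  shows "\<exists>R' rest'. impr P ((x # R) # rest) ((x # y # R') # rest')"
proof -
  obtain T rest' where i1: "impr P ((x # R) # rest) ((x # R) # (y # T) # rest')" using front2[OF w y] by blast
  then have w1: "wfU P ((x # R) # (y # T) # rest')" by (simp add: impr_def)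
  let ?d = "hd (R @ [x])" and ?c = "last (y # T)"
  have "?d \<in> set (concat ((x # R) # (y # T) # rest'))" by (cases R) auto
  moreover have "?c \<in> set (concat ((x # R) # (y # T) # rest'))" by (cases T) auto
  moreover have "x \<in> set (concat ((x # R) # (y # T) # rest'))" "y \<in> set (concat ((x # R) # (y # T) # rest'))" by auto
  ultimately have mg: "ovU x ?d + ovU ?c y \<le> ovU x y + ovU ?c ?d"
    using wf_allowed_le[OF i g w1] by (intro monge_U) auto
  show ?thesis using impr_trans[OF i1 X2[OF w1 mg]] by blast
qed

lemma join_prepare:
  assumes i: "invP S P" and g: "greedy_max P x y" and xy: "x \<noteq> y" and w: "wfU P U"
  shows "\<exists>R rest. impr P U ((x # y # R) # rest)"
proof -
  have a: "allowed P x y" using g by (simp add: greedy_max_def)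
  then have xI: "x \<in> items P" and yI: "y \<in> items P" and yx: "y \<noteq> rcI x"
    using xy by (auto simp: allowed_def)
  obtain U1 where i1: "impr P U U1" and x1: "x \<in> set (concat U1)" using orient[OF i w xI] by blast
  have w1: "wfU P U1" using i1 by (simp add: impr_def)
  obtain R rest where i2: "impr P U1 ((x # R) # rest)" using front[OF w1 x1] by blast
  have i12: "impr P U ((x # R) # rest)" using impr_trans[OF i1 i2] .
  have w2: "wfU P ((x # R) # rest)" using i2 by (simp add: impr_def)
  let ?Q = "set (concat ((x # R) # rest))"
  have le: "\<And>u v. u \<in> ?Q \<Longrightarrow> v \<in> ?Q \<Longrightarrow> ovU u v \<le> ovU x y" using wf_allowed_le[OF i g w2] .
  show ?thesis
  proof (cases "y \<in> ?Q")
    case True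
    show ?thesis
    proof (cases "y \<in> set R")
      case True
      obtain R1 R2 where R: "R = R1 @ y # R2" using split_list[OF True] by blast
      show ?thesis
      proof (cases "R1 = []")
        case True then show ?thesis using i12 R by auto
      next
        case False
        have w3: "wfU P ((x # R1 @ y # R2) # rest)" using w2 R by simp
        have "hd R1 \<in> ?Q" "last R1 \<in> ?Q" using False R by auto
        then have mg: "ovU x (hd R1) + ovU (last R1) y \<le> ovU x y + ovU (last R1) (hd R1)"
          using le \<open>y \<in> ?Q\<close> by (intro monge_U) auto
        show ?thesis using impr_trans[OF i12[unfolded R] X1[OF w3 False mg]] by blast
      qed
    next
      case False
      then have "y \<in> set (concat rest)" using True xy by auto
      then show ?thesis using join_tail[OF i g w2] impr_trans[OF i12] by blast
    qed
  next
    case False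
    then have ry: "rcI y \<in> ?Q" using cover_or_rc[OF w2 yI] by simp
    have rx: "rcI y \<noteq> x" using yx by auto
    show ?thesis
    proof (cases "rcI y \<in> set R")
      case True
      obtain R1 R2 where R: "R = R1 @ rcI y # R2" using split_list[OF True] by blast
      define seg where "seg = R1 @ [rcI y]"
      have R': "R = seg @ R2" by (simp add: R seg_def)
      have w3: "wfU P ((x # seg @ R2) # rest)" using w2 R' by simp
      define e where "e = hd (R2 @ [x])"
      have eQ: "e \<in> ?Q" by (cases R2) (auto simp: e_def R')
      have hs: "hd seg \<in> ?Q" by (cases R1) (auto simp: seg_def R)
      have ey: "e \<noteq> y" using eQ False by auto
      have eI: "e \<in> items P" using wf_items[OF w2 eQ] .
      have al: "allowed P (rcI e) y" using ey items_rcI[OF eI] yI by (auto simp: allowed_def)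
      have mg: "ovU x (hd seg) + ovU (rcI e) y \<le> ovU x y + ovU (rcI e) (hd seg)"
        using le[of x "hd seg"] hs greedy_ovU[OF i g al] by (intro monge_U) auto
      have X: "impr P ((x # seg @ R2) # rest) ((x # rev (map rcI seg) @ R2) # rest)"
        using X3[OF i w3 _ _ yI] mg by (simp add: seg_def e_def)
      have "rev (map rcI seg) @ R2 = y # (rev (map rcI R1) @ R2)" by (simp add: seg_def)
      then show ?thesis using impr_trans[OF i12[unfolded R'] X] by auto
    next
      case False
      then have "rcI y \<in> set (concat rest)" using ry rx by auto
      then obtain rest' where i3: "impr P ((x # R) # rest) ((x # R) # rest')"
        and y3: "y \<in> set (concat rest')" using flip_tail[OF i w2] by fastforce
      have w3: "wfU P ((x # R) # rest')" using i3 by (simp add: impr_def)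
      show ?thesis using join_tail[OF i g w3 y3] impr_trans[OF impr_trans[OF i12 i3]] by blast
    qed
  qed
qed

lemma close_prepare:
  assumes i: "invP S P" and g: "greedy_max P x x" and w: "wfU P U"
  shows "\<exists>rest. impr P U ([x] # rest)"
proof -
  have xI: "x \<in> items P" using g by (simp add: greedy_max_def allowed_def)
  obtain U1 where i1: "impr P U U1" and x1: "x \<in> set (concat U1)" using orient[OF i w xI] by blast
  have w1: "wfU P U1" using i1 by (simp add: impr_def)
  obtain R rest where i2: "impr P U1 ((x # R) # rest)" using front[OF w1 x1] by blast
  have i12: "impr P U ((x # R) # rest)" using impr_trans[OF i1 i2] .
  have w2: "wfU P ((x # R) # rest)" using i2 by (simp add: impr_def)
  show ?thesis
  proof (cases "R = []")
    case True then show ?thesis using i12 by auto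
  next
    case False
    have "hd R \<in> set (concat ((x # R) # rest))" "last R \<in> set (concat ((x # R) # rest))" using False by auto
    then have mg: "ovU x (hd R) + ovU (last R) x \<le> ovU x x + ovU (last R) (hd R)"
      using wf_allowed_le[OF i g w2] by (intro monge_U) auto
    show ?thesis using impr_trans[OF i12 X4[OF w2 False mg]] by blast
  qed
qed

lemma wfU_gs: "wfU P U \<Longrightarrow> goodset P (set (concat U))" by (simp add: wfU_def)
lemma goodset_pal: "goodset P Q \<Longrightarrow> u \<in> Q \<Longrightarrow> rcI u \<in> Q \<Longrightarrow> rcI u = u" by (simp add: goodset_def)

lemma Z_fresh:
  assumes i: "invP S P" and g: "greedy_max P x y" and xy: "x \<noteq> y"
    and W: "W \<in> items P" "W \<notin> {x, rcI x, y, rcI y}"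
  shows "W \<noteq> joinI x y \<and> W \<noteq> rcI (joinI x y)"
proof -
  have xI: "x \<in> items P" using g by (simp add: greedy_max_def allowed_def)
  have nx: "snd x \<noteq> []" using invP_good[OF i xI] by (simp add: goodI_def)
  have s1: "sepI x W" using invP_sep[OF i xI W(1)] W(2) by (metis insertCI)
  have s2: "sepI (rcI x) W" using invP_sep[OF i items_rcI[OF xI] W(1)] W(2) by (metis insertCI rcI_rcI)
  have h1: "hd (snd x) \<in> set (snd (joinI x y))" using nx by (simp add: joinI_def)
  have h2: "hd (snd x) \<notin> set (snd W)" using s1 hd_in_set[OF nx] by (auto simp: sepI_def)
  have h3: "rc (hd (snd x)) \<in> set (snd (rcI (joinI x y)))" using nx by (simp add: joinI_def)
  have h4: "rc (hd (snd x)) \<notin> set (snd W)" using s2 hd_in_set[OF nx] by (auto simp: sepI_def)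
  have "W \<noteq> joinI x y" using h1 h2 by auto
  moreover have "W \<noteq> rcI (joinI x y)" using h3 h4 by (auto simp del: snd_rcI)
  ultimately show ?thesis by simp
qed

lemma join_step:
  assumes i: "invP S P" and g: "greedy_max P x y" and xy: "x \<noteq> y" and w: "wfU P ((x # y # R) # rest)"
  shows "wfU (insert (joinI x y) (P - {x, rcI x, y, rcI y})) ((joinI x y # R) # rest) \<and>
         sumL ((joinI x y # R) # rest) + ovU x y = sumL ((x # y # R) # rest) \<and>
         sumO ((x # y # R) # rest) = ovU x y + sumO ((joinI x y # R) # rest)"
proof -
  define Z where "Z = joinI x y"
  define P' where "P' = insert Z (P - {x, rcI x, y, rcI y})"
  have a: "allowed P x y" using g by (simp add: greedy_max_def)
  then have xI: "x \<in> items P" and yI: "y \<in> items P" and yx: "y \<noteq> rcI x"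
    using xy by (auto simp: allowed_def)
  have nx: "snd x \<noteq> []" and ny: "snd y \<noteq> []" using invP_good[OF i xI] invP_good[OF i yI] by (auto simp: goodI_def)
  let ?Q = "set (concat ((x # y # R) # rest))"
  let ?QR = "set R \<union> set (concat rest)"
  have d: "distinct (R @ concat rest)" "x \<notin> ?QR" "y \<notin> ?QR" using w xy by (auto simp: wfU_def)
  have gs: "goodset P ?Q" by (rule wfU_gs[OF w])
  have pal: "\<And>u. u \<in> ?Q \<Longrightarrow> rcI u \<in> ?Q \<Longrightarrow> rcI u = u" by (rule goodset_pal[OF gs])
  have Q0I: "\<And>W. W \<in> ?QR \<Longrightarrow> W \<in> items P \<and> W \<notin> {x, rcI x, y, rcI y}"
  proof -
    fix W assume W: "W \<in> ?QR"
    have "W \<in> items P" using W gs by (auto simp: goodset_def)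
    moreover have "W \<noteq> rcI x"
    proof
      assume "W = rcI x" then have "rcI x = x" using pal[of x] W by auto
      then show False using W d \<open>W = rcI x\<close> by auto
    qed
    moreover have "W \<noteq> rcI y"
    proof
      assume "W = rcI y" then have "rcI y = y" using pal[of y] W by auto
      then show False using W d \<open>W = rcI y\<close> by auto
    qed
    ultimately show "W \<in> items P \<and> W \<notin> {x, rcI x, y, rcI y}" using W d by auto
  qed
  have fresh: "\<And>W. W \<in> ?QR \<Longrightarrow> W \<noteq> Z \<and> W \<noteq> rcI Z"
    using Q0I Z_fresh[OF i g xy] unfolding Z_def by blast
  have itP': "items P' = insert Z (insert (rcI Z) (items P - {x, rcI x, y, rcI y}))"
    by (simp add: P'_def items_insert items_diff4)
  have wf': "wfU P' ((Z # R) # rest)"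
    unfolding wfU_def goodset_def
  proof (intro conjI ballI impI)
    show "\<And>A. A \<in> set ((Z # R) # rest) \<Longrightarrow> A \<noteq> []" using w by (auto simp: wfU_def)
    have "Z \<notin> ?QR" using fresh by blast
    then show "distinct (concat ((Z # R) # rest))" using d by auto
    show "set (concat ((Z # R) # rest)) \<subseteq> items P'" using Q0I itP' by auto
  next
    fix p assume p: "p \<in> P'"
    show "p \<in> set (concat ((Z # R) # rest)) \<or> rcI p \<in> set (concat ((Z # R) # rest))"
    proof (cases "p = Z")
      case False
      then have p1: "p \<in> P" "p \<notin> {x, rcI x, y, rcI y}" using p by (auto simp: P'_def)
      then have "p \<in> ?Q \<or> rcI p \<in> ?Q" using gs by (auto simp: goodset_def)
      moreover have "rcI p \<notin> {x, y}" using p1 by auto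
      ultimately show ?thesis using p1 by auto
    qed simp
  next
    fix u assume u: "u \<in> set (concat ((Z # R) # rest))" and ru: "rcI u \<in> set (concat ((Z # R) # rest))"
    show "rcI u = u"
    proof (cases "u = Z")
      case True
      have "rcI Z \<notin> ?QR" using fresh by blast
      then show ?thesis using ru True by auto
    next
      case False
      then have u0: "u \<in> ?QR" using u by auto
      have "rcI u \<noteq> Z" using fresh[OF u0] by auto
      then have "rcI u \<in> ?QR" using ru by auto
      then show ?thesis using pal[of u] u0 by auto
    qed
  qed
  have sL: "sumL ((Z # R) # rest) + ovU x y = sumL ((x # y # R) # rest)"
    using Lu_join[OF nx ny] by (simp add: Z_def)
  have oZ1: "\<And>v. ovU Z v = ovU y v" using ny by (simp add: ovU_def Z_def joinI_def)
  have oZ2: "\<And>v. ovU v Z = ovU v x" using nx by (simp add: ovU_def Z_def joinI_def)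
  have oZZ: "ovU Z Z = ovU y x" using nx ny by (simp add: ovU_def Z_def joinI_def)
  have sO: "csum ovU (x # y # R) = ovU x y + csum ovU (Z # R)"
  proof (cases "R = []")
    case True then show ?thesis using oZZ by (simp add: csum_nonempty)
  next
    case False
    have "csum ovU (x # y # R) = ovU x y + (ovU y (hd R) + psum ovU R) + ovU (last R) x"
      using False psum_append[of "[y]" R ovU] by (simp add: csum_nonempty)
    moreover have "csum ovU (Z # R) = (ovU Z (hd R) + psum ovU R) + ovU (last R) Z"
      using False psum_append[of "[Z]" R ovU] by (simp add: csum_nonempty)
    ultimately show ?thesis using oZ1 oZ2 by simp
  qed
  show ?thesis using wf' sL sO by (simp add: Z_def P'_def)
qed

lemma close_step:
  assumes w: "wfU P ([x] # rest)"
  shows "wfU (P - {x, rcI x}) rest \<and> sumL ([x] # rest) = Lu x + sumL rest \<and>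
         sumO ([x] # rest) = ovU x x + sumO rest"
proof -
  let ?Q = "set (concat ([x] # rest))"
  let ?QR = "set (concat rest)"
  have d: "distinct (concat rest)" "x \<notin> ?QR" using w by (auto simp: wfU_def)
  have gs: "goodset P ?Q" by (rule wfU_gs[OF w])
  have pal: "\<And>u. u \<in> ?Q \<Longrightarrow> rcI u \<in> ?Q \<Longrightarrow> rcI u = u" by (rule goodset_pal[OF gs])
  have nrx: "rcI x \<notin> ?QR"
  proof
    assume r: "rcI x \<in> ?QR" then have "rcI x = x" using pal[of x] by auto
    then show False using r d by auto
  qed
  have wf': "wfU (P - {x, rcI x}) rest"
    unfolding wfU_def goodset_def
  proof (intro conjI ballI impI)
    show "\<And>A. A \<in> set rest \<Longrightarrow> A \<noteq> []" using w by (auto simp: wfU_def)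
    show "distinct (concat rest)" using d by simp
    show "?QR \<subseteq> items (P - {x, rcI x})" using gs d nrx by (auto simp: goodset_def items_diff2)
  next
    fix p assume p: "p \<in> P - {x, rcI x}"
    then have "p \<in> ?Q \<or> rcI p \<in> ?Q" using gs by (auto simp: goodset_def)
    moreover have "rcI p \<noteq> x" using p by auto
    ultimately show "p \<in> ?QR \<or> rcI p \<in> ?QR" using p by auto
  next
    fix u assume "u \<in> ?QR" "rcI u \<in> ?QR" then show "rcI u = u" using pal by auto
  qed
  then show ?thesis by (simp add: csum_nonempty)
qed

definition invC :: "dna set \<Rightarrow> item set \<Rightarrow> dna list list \<Rightarrow> bool" where
  "invC S P Cs \<longleftrightarrow> distinct (concat Cs) \<and> (\<forall>C\<in>set Cs. C \<noteq> []) \<and> set (concat Cs) \<subseteq> vertices S \<and>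
     (\<forall>v\<in>set (concat Cs). rc v \<in> set (concat Cs) \<longrightarrow> rc v = v) \<and>
     (\<forall>u\<in>items P. set (snd u) \<inter> set (concat Cs) = {}) \<and>
     (\<forall>s\<in>S. (\<exists>u\<in>items P. s \<in> set (snd u)) \<or> s \<in> set (concat Cs) \<or> rc s \<in> set (concat Cs))"

lemma close_invC:
  assumes i: "invP S P" and c: "invC S P Cs" and xI: "x \<in> items P"
  shows "invC S (P - {x, rcI x}) (Cs @ [snd x])"
proof -
  have gx: "goodI S x" using invP_good[OF i xI] .
  have rxI: "rcI x \<in> items P" using items_rcI[OF xI] .
  have dx: "set (snd x) \<inter> set (concat Cs) = {}" "set (snd (rcI x)) \<inter> set (concat Cs) = {}"
    using c xI rxI unfolding invC_def by blast+
  have sep: "set (snd u) \<inter> set (snd x) = {}" if u: "u \<in> items P - {x, rcI x}" for u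
  proof -
    have "x \<noteq> u" "x \<noteq> rcI u" using u by auto
    then have "sepI u x" using invP_sep[OF i _ xI] u by blast
    then show ?thesis by (simp add: sepI_def)
  qed
  show ?thesis unfolding invC_def items_diff2
  proof (intro conjI ballI impI)
    show "distinct (concat (Cs @ [snd x]))" using c gx dx by (auto simp: invC_def goodI_def)
    show "\<And>C. C \<in> set (Cs @ [snd x]) \<Longrightarrow> C \<noteq> []" using c gx by (auto simp: invC_def goodI_def)
    show "set (concat (Cs @ [snd x])) \<subseteq> vertices S" using c gx by (auto simp: invC_def goodI_def)
  next
    fix v assume v: "v \<in> set (concat (Cs @ [snd x]))" and rv: "rc v \<in> set (concat (Cs @ [snd x]))"
    have rx: "set (snd (rcI x)) = rc ` set (snd x)" by simp
    have p1: "rc w \<notin> set (concat Cs)" if "w \<in> set (snd x)" for w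
      using dx(2) that unfolding rx by blast
    have p2: "rc w \<notin> set (snd x)" if "w \<in> set (concat Cs)" for w
    proof
      assume "rc w \<in> set (snd x)"
      then have "rc (rc w) \<in> rc ` set (snd x)" by blast
      then have "w \<in> rc ` set (snd x)" by simp
      then show False using dx(2) that unfolding rx by blast
    qed
    have cpal: "\<And>w. w \<in> set (concat Cs) \<Longrightarrow> rc w \<in> set (concat Cs) \<Longrightarrow> rc w = w"
      using c unfolding invC_def by blast
    have xpal: "\<And>w. w \<in> set (snd x) \<Longrightarrow> rc w \<in> set (snd x) \<Longrightarrow> rc w = w"
      using gx unfolding goodI_def by blast
    have v': "v \<in> set (concat Cs) \<or> v \<in> set (snd x)" using v by auto
    have rv': "rc v \<in> set (concat Cs) \<or> rc v \<in> set (snd x)" using rv by auto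
    show "rc v = v" using v' rv' cpal xpal p1 p2 by blast
  next
    fix u assume u: "u \<in> items P - {x, rcI x}"
    have "set (snd u) \<inter> set (concat Cs) = {}" using c u unfolding invC_def by blast
    then show "set (snd u) \<inter> set (concat (Cs @ [snd x])) = {}" using sep[OF u] by auto
  next
    fix s assume s: "s \<in> S"
    then have "(\<exists>u\<in>items P. s \<in> set (snd u)) \<or> s \<in> set (concat Cs) \<or> rc s \<in> set (concat Cs)"
      using c by (simp add: invC_def)
    then show "(\<exists>u\<in>items P - {x, rcI x}. s \<in> set (snd u)) \<or> s \<in> set (concat (Cs @ [snd x])) \<or> rc s \<in> set (concat (Cs @ [snd x]))"
    proof (elim disjE bexE)
      fix u assume u: "u \<in> items P" "s \<in> set (snd u)"
      show ?thesis
      proof (cases "u = x")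
        case True then show ?thesis using u by auto
      next
        case False
        show ?thesis
        proof (cases "u = rcI x")
          case True
          then have "s \<in> rc ` set (snd x)" using u by simp
          then have "rc s \<in> set (snd x)" by auto
          then show ?thesis by auto
        next
          case False2: False
          then show ?thesis using u False by blast
        qed
      qed
    qed auto
  qed
qed

lemma join_invC:
  assumes i: "invP S P" and c: "invC S P Cs" and g: "greedy_max P x y" and xy: "x \<noteq> y"
  shows "invC S (insert (joinI x y) (P - {x, rcI x, y, rcI y})) Cs"
proof -
  have xI: "x \<in> items P" and yI: "y \<in> items P" using g by (auto simp: greedy_max_def allowed_def)
  have it: "items (insert (joinI x y) (P - {x, rcI x, y, rcI y})) = insert (joinI x y) (insert (rcI (joinI x y)) (items P - {x, rcI x, y, rcI y}))"
    by (simp add: items_insert items_diff4)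
  have sZ: "set (snd (joinI x y)) = set (snd x) \<union> set (snd y)" by (simp add: joinI_def)
  have srZ: "set (snd (rcI (joinI x y))) = set (snd (rcI x)) \<union> set (snd (rcI y))" by (auto simp: joinI_def)
  have dj: "\<And>u. u \<in> items P \<Longrightarrow> set (snd u) \<inter> set (concat Cs) = {}" using c by (simp add: invC_def)
  have cc: "distinct (concat Cs) \<and> (\<forall>C\<in>set Cs. C \<noteq> []) \<and> set (concat Cs) \<subseteq> vertices S \<and>
     (\<forall>v\<in>set (concat Cs). rc v \<in> set (concat Cs) \<longrightarrow> rc v = v)" using c unfolding invC_def by blast
  have dsj: "\<forall>u\<in>insert (joinI x y) (insert (rcI (joinI x y)) (items P - {x, rcI x, y, rcI y})). set (snd u) \<inter> set (concat Cs) = {}"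
  proof
    fix u assume "u \<in> insert (joinI x y) (insert (rcI (joinI x y)) (items P - {x, rcI x, y, rcI y}))"
    then show "set (snd u) \<inter> set (concat Cs) = {}"
    proof (elim insertE)
      assume "u = joinI x y" then show ?thesis using dj[OF xI] dj[OF yI] sZ by auto
    next
      assume "u = rcI (joinI x y)" then show ?thesis using dj[OF items_rcI[OF xI]] dj[OF items_rcI[OF yI]] srZ by auto
    next
      assume "u \<in> items P - {x, rcI x, y, rcI y}" then show ?thesis using dj by blast
    qed
  qed
  have cov: "\<forall>s\<in>S. (\<exists>u\<in>insert (joinI x y) (insert (rcI (joinI x y)) (items P - {x, rcI x, y, rcI y})). s \<in> set (snd u)) \<or> s \<in> set (concat Cs) \<or> rc s \<in> set (concat Cs)"
  proof
    fix s assume s: "s \<in> S"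
    then have "(\<exists>u\<in>items P. s \<in> set (snd u)) \<or> s \<in> set (concat Cs) \<or> rc s \<in> set (concat Cs)"
      using c by (simp add: invC_def)
    then show "(\<exists>u\<in>insert (joinI x y) (insert (rcI (joinI x y)) (items P - {x, rcI x, y, rcI y})). s \<in> set (snd u)) \<or> s \<in> set (concat Cs) \<or> rc s \<in> set (concat Cs)"
    proof (elim disjE bexE)
      fix u assume u: "u \<in> items P" "s \<in> set (snd u)"
      show ?thesis
      proof (cases "u \<in> {x, y}")
        case True then show ?thesis using u sZ by auto
      next
        case False
        show ?thesis
        proof (cases "u \<in> {rcI x, rcI y}")
          case True then show ?thesis using u srZ by blast
        next
          case False2: False
          then show ?thesis using u False by blast
        qed
      qed
    qed auto
  qed
  show ?thesis unfolding invC_def it using cc dsj cov by blast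
qed

definition sing :: "dna \<Rightarrow> item" where "sing v = (v, [v])"

lemma rcI_sing: "rcI (sing v) = sing (rc v)" by (simp add: sing_def rcI_def)

lemma items_init: "items ((\<lambda>s. (s, [s])) ` S) = sing ` vertices S"
  by (auto simp: items_def vertices_def sing_def rcI_def image_iff)

lemma init_inv:
  assumes inst: "scs_rc_instance S"
  shows "invP S ((\<lambda>s. (s, [s])) ` S) \<and> invC S ((\<lambda>s. (s, [s])) ` S) []"
proof -
  have sf: "\<And>u v. u \<in> vertices S \<Longrightarrow> v \<in> vertices S \<Longrightarrow> u \<noteq> v \<Longrightarrow> \<not> sublist u v"
    using inst by (simp add: scs_rc_instance_def)
  have "invP S ((\<lambda>s. (s, [s])) ` S)"
    unfolding invP_def items_init
  proof (intro conjI ballI impI)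
    fix u assume "u \<in> sing ` vertices S"
    then show "goodI S u" by (auto simp: goodI_def sing_def)
  next
    fix u v assume u: "u \<in> sing ` vertices S" and v: "v \<in> sing ` vertices S" and uv: "v \<noteq> u \<and> v \<noteq> rcI u"
    then obtain a b where ab: "a \<in> vertices S" "b \<in> vertices S" "u = sing a" "v = sing b" by blast
    then have "a \<noteq> b" using uv by auto
    then show "sepI u v" using sf[OF ab(1,2)] ab by (auto simp: sepI_def sing_def)
  next
    fix u v assume u: "u \<in> sing ` vertices S" and v: "v \<in> sing ` vertices S"
    then show "ovI u v" using ov_lt by (auto simp: ovI_def sing_def)
  qed
  moreover have "invC S ((\<lambda>s. (s, [s])) ` S) []"
    unfolding invC_def items_init using vertices_def by (auto simp: sing_def)
  ultimately show ?thesis by simp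
qed

lemma init_cover:
  assumes cc: "is_cycle_cover S cs"
  shows "wfU ((\<lambda>s. (s, [s])) ` S) (map (map sing) cs) \<and>
         sum_list (map cyc_weight cs) + sumO (map (map sing) cs) = sumL (map (map sing) cs)"
proof -
  let ?P = "(\<lambda>s. (s, [s])) ` S"
  let ?U = "map (map sing) cs"
  have cc': "(\<forall>c\<in>set cs. c \<noteq> []) \<and> distinct (concat cs) \<and> set (concat cs) \<subseteq> vertices S \<and>
     (\<forall>s\<in>S. (s \<in> set (concat cs) \<or> rc s \<in> set (concat cs)) \<and>
             (s \<noteq> rc s \<longrightarrow> \<not> (s \<in> set (concat cs) \<and> rc s \<in> set (concat cs))))"
    using cc by (simp add: is_cycle_cover_def)
  have injs: "inj sing" by (auto simp: inj_def sing_def)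
  have cU: "concat ?U = map sing (concat cs)" by (simp add: map_concat)
  have wf: "wfU ?P ?U"
    unfolding wfU_def goodset_def cU
  proof (intro conjI ballI impI)
    show "\<And>A. A \<in> set ?U \<Longrightarrow> A \<noteq> []" using cc' by auto
    show "distinct (map sing (concat cs))" using cc' injs by (simp add: distinct_map inj_on_def inj_def)
    show "set (map sing (concat cs)) \<subseteq> items ?P" using cc' by (auto simp: items_init)
  next
    fix p assume "p \<in> ?P"
    then obtain s where s: "s \<in> S" "p = sing s" by (auto simp: sing_def)
    have "s \<in> set (concat cs) \<or> rc s \<in> set (concat cs)" using cc' s(1) by blast
    then show "p \<in> set (map sing (concat cs)) \<or> rcI p \<in> set (map sing (concat cs))"
      using s(2) by (auto simp: rcI_sing)
  next
    fix u assume u: "u \<in> set (map sing (concat cs))" and ru: "rcI u \<in> set (map sing (concat cs))"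
    then obtain v where v: "v \<in> set (concat cs)" "u = sing v" by auto
    have rv: "rc v \<in> set (concat cs)" using ru v injs by (auto simp: rcI_sing inj_def)
    have vV: "v \<in> vertices S" using v cc' by auto
    then obtain s where s: "s \<in> S" "v = s \<or> v = rc s" by (auto simp: vertices_def)
    have "rc v = v"
    proof (rule ccontr)
      assume ne: "rc v \<noteq> v"
      then have "s \<noteq> rc s" using s by auto
      moreover have "s \<in> set (concat cs) \<and> rc s \<in> set (concat cs)" using s v rv by auto
      ultimately show False using cc' s by blast
    qed
    then show "rcI u = u" using v by (simp add: rcI_sing)
  qed
  have cyc: "\<And>zs. cyc_weight zs + csum ovU (map sing zs) = sum_list (map Lu (map sing zs))"
  proof -
    fix zs
    have "csum ovU (map sing zs) = csum ov zs" by (simp add: csum_map ovU_def sing_def)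
    moreover have "sum_list (map Lu (map sing zs)) = sum_list (map length zs)"
      by (simp add: Lu_def sing_def comp_def)
    ultimately show "cyc_weight zs + csum ovU (map sing zs) = sum_list (map Lu (map sing zs))"
      using csum_dst_ov[of zs] by (simp add: cyc_weight_csum)
  qed
  have "sum_list (map cyc_weight cs) + sumO ?U = sumL ?U"
  proof (induction cs)
    case (Cons a cs)
    then show ?case using cyc[of a] by (simp add: sumL_def)
  qed simp
  then show ?thesis using wf by simp
qed

lemma main_inv:
  assumes "greedy_run S P Cs" and inst: "scs_rc_instance S"
  shows "invP S P \<and> invC S P Cs \<and>
    (\<forall>cs. is_cycle_cover S cs \<longrightarrow> (\<exists>U. wfU P U \<and>
        sum_list (map cyc_weight Cs) + sumL U \<le> sum_list (map cyc_weight cs) + sumO U))"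
  using assms(1)
proof (induction rule: greedy_run.induct)
  case init
  have "\<forall>cs. is_cycle_cover S cs \<longrightarrow> (\<exists>U. wfU ((\<lambda>s. (s, [s])) ` S) U \<and>
        sum_list (map cyc_weight []) + sumL U \<le> sum_list (map cyc_weight cs) + sumO U)"
  proof (intro allI impI)
    fix cs assume "is_cycle_cover S cs"
    from init_cover[OF this] show "\<exists>U. wfU ((\<lambda>s. (s, [s])) ` S) U \<and>
        sum_list (map cyc_weight []) + sumL U \<le> sum_list (map cyc_weight cs) + sumO U"
      by (intro exI[of _ "map (map sing) cs"]) simp
  qed
  then show ?case using init_inv[OF inst] by simp
next
  case (close P Cs x)
  have i: "invP S P" and c: "invC S P Cs" using close.IH by auto
  have xI: "x \<in> items P" using close.hyps(2) by (simp add: greedy_max_def allowed_def)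
  have i': "invP S (P - {x, rcI x})" using invP_mono[OF i] by blast
  have c': "invC S (P - {x, rcI x}) (Cs @ [snd x])" using close_invC[OF i c xI] .
  have nx: "snd x \<noteq> []" using invP_good[OF i xI] by (simp add: goodI_def)
  have "\<exists>U. wfU (P - {x, rcI x}) U \<and>
        sum_list (map cyc_weight (Cs @ [snd x])) + sumL U \<le> sum_list (map cyc_weight cs) + sumO U"
    if cs: "is_cycle_cover S cs" for cs
  proof -
    obtain U where w: "wfU P U" and le: "sum_list (map cyc_weight Cs) + sumL U \<le> sum_list (map cyc_weight cs) + sumO U"
      using close.IH cs by blast
    obtain rest where im: "impr P U ([x] # rest)" using close_prepare[OF i close.hyps(2) w] by blast
    have w1: "wfU P ([x] # rest)" using im by (simp add: impr_def)
    have st: "wfU (P - {x, rcI x}) rest \<and> sumL ([x] # rest) = Lu x + sumL rest \<and> sumO ([x] # rest) = ovU x x + sumO rest"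
      using close_step[OF w1] .
    have "sum_list (map cyc_weight (Cs @ [snd x])) + sumL rest \<le> sum_list (map cyc_weight cs) + sumO rest"
      using le im st Lu_close[OF nx] by (simp add: impr_def)
    then show ?thesis using st by blast
  qed
  then show ?case using i' c' by blast
next
  case (join P Cs x y)
  have i: "invP S P" and c: "invC S P Cs" using join.IH by auto
  let ?P' = "insert (pref (fst x) (fst y) @ fst y, snd x @ snd y) (P - {x, rcI x, y, rcI y})"
  have eq: "?P' = insert (joinI x y) (P - {x, rcI x, y, rcI y})" by (simp add: joinI_def mrg2_def)
  have i': "invP S ?P'" unfolding eq using join_invP[OF i join.hyps(2,3)] .
  have c': "invC S ?P' Cs" unfolding eq using join_invC[OF i c join.hyps(2,3)] .
  have "\<exists>U. wfU ?P' U \<and>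
        sum_list (map cyc_weight Cs) + sumL U \<le> sum_list (map cyc_weight cs) + sumO U"
    if cs: "is_cycle_cover S cs" for cs
  proof -
    obtain U where w: "wfU P U" and le: "sum_list (map cyc_weight Cs) + sumL U \<le> sum_list (map cyc_weight cs) + sumO U"
      using join.IH cs by blast
    obtain R rest where im: "impr P U ((x # y # R) # rest)" using join_prepare[OF i join.hyps(2,3) w] by blast
    have w1: "wfU P ((x # y # R) # rest)" using im by (simp add: impr_def)
    have st: "wfU (insert (joinI x y) (P - {x, rcI x, y, rcI y})) ((joinI x y # R) # rest) \<and>
         sumL ((joinI x y # R) # rest) + ovU x y = sumL ((x # y # R) # rest) \<and>
         sumO ((x # y # R) # rest) = ovU x y + sumO ((joinI x y # R) # rest)"
      using join_step[OF i join.hyps(2,3) w1] .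
    have "sum_list (map cyc_weight Cs) + sumL ((joinI x y # R) # rest) \<le> sum_list (map cyc_weight cs) + sumO ((joinI x y # R) # rest)"
      using le im st unfolding impr_def by linarith
    then show ?thesis using st unfolding eq by blast
  qed
  then show ?case using i' c' by blast
qed

lemma wfU_empty: "wfU {} U \<Longrightarrow> U = []"
proof -
  assume w: "wfU {} U"
  have "set (concat U) \<subseteq> items {}" using w by (simp add: wfU_def goodset_def)
  then have "set (concat U) = {}" by (simp add: items_def)
  then show "U = []" using w by (cases U) (auto simp: wfU_def)
qed

theorem greedy_final:
  assumes g: "greedy_run S {} Cs" and inst: "scs_rc_instance S"
  shows "is_cycle_cover S Cs \<and> sum_list (map cyc_weight Cs) \<le> wCYC S \<and> invC S {} Cs"
proof -
  have m: "invC S {} Cs" and opt: "\<And>cs. is_cycle_cover S cs \<Longrightarrow> sum_list (map cyc_weight Cs) \<le> sum_list (map cyc_weight cs)"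
  proof -
    show "invC S {} Cs" using main_inv[OF g inst] by blast
    fix cs assume cs: "is_cycle_cover S cs"
    then obtain U where u1: "wfU {} U" and u2: "sum_list (map cyc_weight Cs) + sumL U \<le> sum_list (map cyc_weight cs) + sumO U"
      using main_inv[OF g inst] by blast
    have "U = []" using wfU_empty[OF u1] .
    then show "sum_list (map cyc_weight Cs) \<le> sum_list (map cyc_weight cs)" using u2 by simp
  qed
  have cc: "is_cycle_cover S Cs"
    unfolding is_cycle_cover_def
  proof (intro conjI ballI impI)
    show "\<And>c. c \<in> set Cs \<Longrightarrow> c \<noteq> []" using m by (simp add: invC_def)
    show "distinct (concat Cs)" using m by (simp add: invC_def)
    show "set (concat Cs) \<subseteq> vertices S" using m by (simp add: invC_def)
  next
    fix s assume s: "s \<in> S"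
    show "s \<in> set (concat Cs) \<or> rc s \<in> set (concat Cs)"
      using m s by (simp add: invC_def items_def)
  next
    fix s assume s: "s \<in> S" and ne: "s \<noteq> rc s"
    have "\<And>v. v \<in> set (concat Cs) \<Longrightarrow> rc v \<in> set (concat Cs) \<Longrightarrow> rc v = v" using m unfolding invC_def by blast
    then show "\<not> (s \<in> set (concat Cs) \<and> rc s \<in> set (concat Cs))" using ne by metis
  qed
  have "sum_list (map cyc_weight Cs) \<le> wCYC S"
  proof -
    have ex: "\<exists>w cs. is_cycle_cover S cs \<and> w = sum_list (map cyc_weight cs)" using cc by blast
    obtain cs where "is_cycle_cover S cs" "wCYC S = sum_list (map cyc_weight cs)"
      using LeastI_ex[of "\<lambda>w. \<exists>cs. is_cycle_cover S cs \<and> w = sum_list (map cyc_weight cs)"] ex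
      unfolding wCYC_def by blast
    then show ?thesis using opt by simp
  qed
  then show ?thesis using cc m by simp
qed

lemma sublist_drop_prefix: "sublist x w \<longleftrightarrow> (\<exists>q. prefix x (drop q w))"
proof
  assume "sublist x w"
  then obtain p s where "w = p @ x @ s" by (auto simp: sublist_def)
  then have "prefix x (drop (length p) w)" by simp
  then show "\<exists>q. prefix x (drop q w)" by blast
next
  assume "\<exists>q. prefix x (drop q w)"
  then obtain q where "prefix x (drop q w)" by blast
  then show "sublist x w" by (meson prefix_imp_sublist sublist_drop sublist_order.order.trans)
qed

lemma prefix_mrg: "prefix x (mrg (x # l))"
proof (induction l arbitrary: x)
  case Nil then show ?case by simp
next
  case (Cons y zs)
  have "x = pref x y @ take (ov x y) y"
    using ov_drop_take[of x y] by (simp add: pref_def) (metis append_take_drop_id)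
  moreover have "prefix (take (ov x y) y) (mrg (y # zs))"
    using Cons.IH[of y] by (meson prefix_order.trans take_is_prefix)
  ultimately show ?case by (metis mrg.simps(3) same_prefix_prefix)
qed

lemma suffix_mrg: "l \<noteq> [] \<Longrightarrow> suffix (last l) (mrg l)"
proof (induction l rule: mrg.induct)
  case (3 x y zs)
  then show ?case by (auto simp: suffix_def)
qed auto

lemma sublist_mrg: "x \<in> set l \<Longrightarrow> sublist x (mrg l)"
proof (induction l rule: mrg.induct)
  case (2 a) then show ?case by simp
next
  case (3 a b zs)
  show ?case
  proof (cases "x = a")
    case True
    then show ?thesis using prefix_mrg[of a "b # zs"] by (simp add: prefix_imp_sublist)
  next
    case False
    then have "x \<in> set (b # zs)" using 3(2) by simp
    then have "sublist x (mrg (b # zs))" using 3(1) by simp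
    then show ?thesis by (metis mrg.simps(3) sublist_append_leftI sublist_order.order.trans)
  qed
qed simp

lemma least_occ:
  assumes ne: "ixs \<noteq> []" and sub: "\<forall>i\<in>set ixs. sublist (f i) w"
  shows "\<exists>q i0. i0 \<in> set ixs \<and> prefix (f i0) (drop q w) \<and> (\<forall>i\<in>set ixs. sublist (f i) (drop q w))"
proof -
  define Pq where "Pq q \<longleftrightarrow> (\<exists>i\<in>set ixs. prefix (f i) (drop q w))" for q
  have "sublist (f (hd ixs)) w" using ne sub by simp
  then obtain q1 where "prefix (f (hd ixs)) (drop q1 w)" using sublist_drop_prefix by blast
  then have ex: "Pq q1" using ne by (auto simp: Pq_def)
  define q0 where "q0 = (LEAST q. Pq q)"
  have "Pq q0" unfolding q0_def using LeastI[of Pq, OF ex] .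
  then obtain i0 where i0: "i0 \<in> set ixs" "prefix (f i0) (drop q0 w)" by (auto simp: Pq_def)
  have "sublist (f i) (drop q0 w)" if i: "i \<in> set ixs" for i
  proof -
    obtain qi where qi: "prefix (f i) (drop qi w)" using sub i sublist_drop_prefix by blast
    then have "Pq qi" using i by (auto simp: Pq_def)
    then have le: "q0 \<le> qi" unfolding q0_def by (rule Least_le)
    have "drop qi w = drop (qi - q0) (drop q0 w)" using le by simp
    then show ?thesis using qi sublist_drop_prefix by metis
  qed
  then show ?thesis using i0 by blast
qed

lemma dst_le_shift:
  assumes pa: "prefix a w" and pb: "prefix b (drop q w)" and q: "1 \<le> q" and nsub: "\<not> sublist b a"
  shows "dst a b \<le> q"
proof (cases "length a \<le> q")
  case True then show ?thesis by (simp add: dst_def)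
next
  case False
  define k where "k = length a - q"
  have la: "length a \<le> length w" using pa by (simp add: prefix_nth)
  have qw: "q \<le> length w" using False la by simp
  have wa: "\<And>j. j < length a \<Longrightarrow> w ! j = a ! j" using pa by (simp add: prefix_nth)
  have wb: "\<And>t. t < length b \<Longrightarrow> w ! (q + t) = b ! t"
    using pb qw by (simp add: prefix_nth)
  have kb: "k < length b"
  proof (rule ccontr)
    assume "\<not> k < length b"
    then have "q + length b \<le> length a" using False by (simp add: k_def)
    then have "sublist b a" unfolding sublist_nth
      using wa wb by (intro exI[of _ q]) auto
    then show False using nsub by simp
  qed
  have "k \<le> ov a b"
  proof (rule ov_geI)
    fix t assume t: "t < k"
    have "a ! (length a - k + t) = a ! (q + t)" using False by (simp add: k_def)
    also have "\<dots> = w ! (q + t)" using wa[of "q + t"] t by (simp add: k_def)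
    also have "\<dots> = b ! t" using wb[of t] t kb by simp
    finally show "a ! (length a - k + t) = b ! t" .
  qed (use q False kb in \<open>auto simp: k_def\<close>)
  then show ?thesis by (simp add: dst_def k_def)
qed

lemma order_aux:
  fixes f :: "'i \<Rightarrow> dna"
  shows "prefix (f i0) w \<Longrightarrow> i0 \<notin> set rest \<Longrightarrow> distinct rest \<Longrightarrow> (\<forall>i\<in>set rest. sublist (f i) w) \<Longrightarrow>
    (\<forall>i\<in>set (i0 # rest). \<forall>j\<in>set (i0 # rest). i \<noteq> j \<longrightarrow> \<not> sublist (f i) (f j)) \<Longrightarrow>
    \<exists>L. mset L = mset rest \<and> length (mrg (map f (i0 # L))) \<le> length w"
proof (induction "length rest" arbitrary: w i0 rest rule: less_induct)
  case less
  show ?case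
  proof (cases "rest = []")
    case True
    then show ?thesis using less.prems(1) by (intro exI[of _ "[]"]) (auto simp: prefix_nth)
  next
    case False
    obtain q o2 where o2: "o2 \<in> set rest" "prefix (f o2) (drop q w)"
      and allsub: "\<forall>i\<in>set rest. sublist (f i) (drop q w)"
      using least_occ[OF False less.prems(4)] by blast
    have oo2: "i0 \<noteq> o2" using o2(1) less.prems(2) by auto
    have q1: "1 \<le> q"
    proof (rule ccontr)
      assume "\<not> 1 \<le> q"
      then have "q = 0" by simp
      then have "prefix (f o2) w" using o2(2) by simp
      then have "prefix (f o2) (f i0) \<or> prefix (f i0) (f o2)" using less.prems(1) prefix_same_cases by blast
      then show False using less.prems(5) oo2 o2(1) prefix_imp_sublist by fastforce
    qed
    define rest' where "rest' = remove1 o2 rest"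
    have len: "length rest' < length rest" using o2(1) length_pos_if_in_set[OF o2(1)] by (simp add: rest'_def length_remove1)
    have srest': "set rest' = set rest - {o2}" using less.prems(3) by (simp add: rest'_def)
    have "\<exists>L. mset L = mset rest' \<and> length (mrg (map f (o2 # L))) \<le> length (drop q w)"
    proof (rule less.hyps[OF len])
      show "prefix (f o2) (drop q w)" by (rule o2(2))
      show "o2 \<notin> set rest'" using srest' by simp
      show "distinct rest'" using less.prems(3) by (simp add: rest'_def)
      show "\<forall>i\<in>set rest'. sublist (f i) (drop q w)" using allsub srest' by simp
      show "\<forall>i\<in>set (o2 # rest'). \<forall>j\<in>set (o2 # rest'). i \<noteq> j \<longrightarrow> \<not> sublist (f i) (f j)"
        using less.prems(5) srest' o2(1) by auto
    qed
    then obtain L' where L': "mset L' = mset rest'" "length (mrg (map f (o2 # L'))) \<le> length (drop q w)" by blast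
    have d: "dst (f i0) (f o2) \<le> q"
      using dst_le_shift[OF less.prems(1) o2(2) q1] less.prems(5) oo2 o2(1) by auto
    have "length (mrg (map f (i0 # o2 # L'))) = dst (f i0) (f o2) + length (mrg (map f (o2 # L')))"
      by (simp add: length_pref_dst)
    also have "\<dots> \<le> length w"
    proof -
      have "dst (f i0) (f o2) \<le> length (f i0)" by (simp add: dst_def)
      moreover have "length (f i0) \<le> length w" using less.prems(1) by (simp add: prefix_nth)
      ultimately show ?thesis using d L'(2) by simp
    qed
    finally have "length (mrg (map f (i0 # o2 # L'))) \<le> length w" .
    moreover have "mset (o2 # L') = mset rest" using L'(1) o2(1) by (simp add: rest'_def)
    ultimately show ?thesis by blast
  qed
qed

lemma order_exists:
  fixes f :: "'i \<Rightarrow> dna"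
  assumes ne: "ixs \<noteq> []" and d: "distinct ixs" and sub: "\<forall>i\<in>set ixs. sublist (f i) w"
    and pw: "\<forall>i\<in>set ixs. \<forall>j\<in>set ixs. i \<noteq> j \<longrightarrow> \<not> sublist (f i) (f j)"
  shows "\<exists>L. mset L = mset ixs \<and> length (mrg (map f L)) \<le> length w"
proof -
  obtain q i0 where i0: "i0 \<in> set ixs" "prefix (f i0) (drop q w)" and allsub: "\<forall>i\<in>set ixs. sublist (f i) (drop q w)"
    using least_occ[OF ne sub] by blast
  have "\<exists>L. mset L = mset (remove1 i0 ixs) \<and> length (mrg (map f (i0 # L))) \<le> length (drop q w)"
  proof (rule order_aux)
    show "prefix (f i0) (drop q w)" by (rule i0(2))
    show "i0 \<notin> set (remove1 i0 ixs)" using d by simp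
    show "distinct (remove1 i0 ixs)" using d by simp
    show "\<forall>i\<in>set (remove1 i0 ixs). sublist (f i) (drop q w)" using allsub set_remove1_subset[of i0 ixs] by blast
    show "\<forall>i\<in>set (i0 # remove1 i0 ixs). \<forall>j\<in>set (i0 # remove1 i0 ixs). i \<noteq> j \<longrightarrow> \<not> sublist (f i) (f j)"
      using pw i0(1) set_remove1_subset[of i0 ixs] by auto
  qed
  then obtain L where L: "mset L = mset (remove1 i0 ixs)" "length (mrg (map f (i0 # L))) \<le> length (drop q w)" by blast
  have "mset (i0 # L) = mset ixs" using L(1) i0(1) by simp
  moreover have "length (mrg (map f (i0 # L))) \<le> length w" using L(2) by simp
  ultimately show ?thesis by blast
qed


lemma mrg_replace:
  fixes f g :: "'i \<Rightarrow> dna"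
  assumes "\<forall>i\<in>set L. prefix (f i) (g i) \<and> suffix (f i) (g i)"
  shows "length (mrg (map g L)) \<le> length (mrg (map f L)) + sum_list (map (\<lambda>i. length (g i) - length (f i)) L)"
  using assms
proof (induction L rule: induct_list012)
  case (2 x)
  then show ?case by simp
next
  case (3 i j L)
  have fi: "prefix (f i) (g i)" "suffix (f i) (g i)" and fj: "prefix (f j) (g j)" using 3(3) by auto
  have ov: "ov (f i) (f j) \<le> ov (g i) (g j)" using ov_suffix_prefix[OF fi(2) fj] .
  have li: "length (f i) \<le> length (g i)" using fi(1) by (simp add: prefix_nth)
  have "dst (g i) (g j) \<le> dst (f i) (f j) + (length (g i) - length (f i))"
    using ov li ov_le1[of "f i" "f j"] by (simp add: dst_def)
  moreover have "length (mrg (map g (j # L))) \<le> length (mrg (map f (j # L))) + sum_list (map (\<lambda>i. length (g i) - length (f i)) (j # L))"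
    using 3(2) 3(3) by simp
  ultimately show ?case by (simp add: length_pref_dst)
qed simp

lemma rotate_last: "1 \<le> j \<Longrightarrow> j \<le> length zs \<Longrightarrow> last (rotate j zs) = zs ! (j - 1)"
proof -
  assume j: "1 \<le> j" "j \<le> length zs"
  show ?thesis
  proof (cases "j = length zs")
    case True
    then have "rotate j zs = zs" by simp
    moreover have "zs \<noteq> []" using j by (cases zs) auto
    ultimately show ?thesis using True by (simp add: last_conv_nth)
  next
    case False
    then have jm: "j mod length zs = j" using j by simp
    have "rotate j zs = drop j zs @ take j zs" using rotate_drop_take[of j zs] jm by simp
    moreover have tne: "take j zs \<noteq> []" using j by (cases zs) auto
    ultimately have "last (rotate j zs) = last (take j zs)" by simp
    also have "\<dots> = take j zs ! (length (take j zs) - 1)" using tne by (rule last_conv_nth)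
    also have "\<dots> = zs ! (j - 1)" using j by simp
    finally show ?thesis .
  qed
qed

lemma csum_rotate_n: "csum f (rotate n zs) = csum f zs"
  using csum_rotate[of f "drop (n mod length zs) zs" "take (n mod length zs) zs"]
  by (simp add: rotate_drop_take)

lemma yC_facts:
  assumes j: "1 \<le> j" "j \<le> length zs"
  shows "length (mrg (zs ! (j - 1) # rotate j zs)) = cyc_weight zs + length (zs ! (j - 1)) \<and>
         prefix (zs ! (j - 1)) (mrg (zs ! (j - 1) # rotate j zs)) \<and>
         suffix (zs ! (j - 1)) (mrg (zs ! (j - 1) # rotate j zs))"
proof -
  define z where "z = zs ! (j - 1)"
  define r where "r = rotate j zs"
  have rne: "r \<noteq> []" using j by (auto simp: r_def)
  have lr: "last r = z" using rotate_last[OF j] by (simp add: r_def z_def)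
  have "length (mrg (z # r)) = psum dst (z # r) + length (last (z # r))" by (rule length_mrg) simp
  also have "psum dst (z # r) = dst z (hd r) + psum dst r"
    using psum_append[of "[z]" r dst] rne by simp
  also have "last (z # r) = z" using lr rne by simp
  finally have l1: "length (mrg (z # r)) = dst z (hd r) + psum dst r + length z" .
  have "cyc_weight zs = csum dst r" by (simp add: cyc_weight_csum r_def csum_rotate_n)
  also have "\<dots> = psum dst r + dst z (hd r)" using rne lr by (simp add: csum_nonempty)
  finally have "length (mrg (z # r)) = cyc_weight zs + length z" using l1 by simp
  moreover have "prefix z (mrg (z # r))" by (rule prefix_mrg)
  moreover have "suffix z (mrg (z # r))" using suffix_mrg[of "z # r"] lr rne by simp
  ultimately show ?thesis by (simp add: z_def r_def)
qed

lemma sublist_concat_mem: "u \<in> set xs \<Longrightarrow> sublist u (concat xs)"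
proof -
  assume u: "u \<in> set xs"
  obtain a b where "xs = a @ u # b" using split_list[OF u] by blast
  then have "concat xs = concat a @ u @ concat b" by simp
  then show ?thesis unfolding sublist_def by blast
qed

lemma prefix_rc: "prefix a b \<Longrightarrow> suffix (rc a) (rc b)"
proof -
  assume "prefix a b" then obtain c where "b = a @ c" by (auto simp: prefix_def)
  then have "rc b = rc c @ rc a" by simp
  then show ?thesis unfolding suffix_def by blast
qed
lemma suffix_rc: "suffix a b \<Longrightarrow> prefix (rc a) (rc b)"
proof -
  assume "suffix a b" then obtain c where "b = c @ a" by (auto simp: suffix_def)
  then have "rc b = rc a @ rc c" by simp
  then show ?thesis unfolding prefix_def by blast
qed

theorem lemma17:
  fixes S :: "dna set" and Cs :: "dna list list" and xC :: "dna list \<Rightarrow> dna"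
  assumes "scs_rc_instance S"
    and "greedy_run S {} Cs"
    and "\<forall>zs\<in>set Cs. xC_props zs (xC zs)"
  shows "OPT (xC ` set Cs) \<le> OPT S + wCYC S"
proof -
  note inst = assms(1) and g = assms(2) and xp = assms(3)
  have gf: "is_cycle_cover S Cs" "sum_list (map cyc_weight Cs) \<le> wCYC S" "invC S {} Cs"
    using greedy_final[OF g inst] by auto
  have finS: "finite S" using inst by (simp add: scs_rc_instance_def)
  have sfree: "\<And>u v. u \<in> vertices S \<Longrightarrow> v \<in> vertices S \<Longrightarrow> u \<noteq> v \<Longrightarrow> \<not> sublist u v"
    using inst by (simp add: scs_rc_instance_def)
  define PS where "PS n \<longleftrightarrow> (\<exists>w. length w = n \<and> (\<forall>u\<in>S. sublist u w \<or> sublist (rc u) w))" for n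
  obtain xs where xs: "set xs = S" using finite_list[OF finS] by blast
  have "PS (length (concat xs))" unfolding PS_def using xs sublist_concat_mem by blast
  then have "PS (OPT S)" unfolding OPT_def PS_def[symmetric] by (rule LeastI)
  then obtain w0 where w0: "length w0 = OPT S" "\<forall>u\<in>S. sublist u w0 \<or> sublist (rc u) w0"
    unfolding PS_def by blast
  have cyc: "distinct (concat Cs)" "\<forall>C\<in>set Cs. C \<noteq> []" "set (concat Cs) \<subseteq> vertices S"
    "\<forall>v\<in>set (concat Cs). rc v \<in> set (concat Cs) \<longrightarrow> rc v = v"
    using gf(3) by (auto simp: invC_def)
  have distCs: "distinct Cs" and disj: "\<And>A B. A \<in> set Cs \<Longrightarrow> B \<in> set Cs \<Longrightarrow> A \<noteq> B \<Longrightarrow> set A \<inter> set B = {}"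
  proof -
    have "removeAll [] Cs = Cs" using cyc(2) by (auto intro: removeAll_id)
    then show "distinct Cs" using cyc(1) distinct_concat_iff[of Cs] by simp
    show "\<And>A B. A \<in> set Cs \<Longrightarrow> B \<in> set Cs \<Longrightarrow> A \<noteq> B \<Longrightarrow> set A \<inter> set B = {}"
      using cyc(1) distinct_concat_iff[of Cs] by blast
  qed
  have "\<forall>zs\<in>set Cs. \<exists>j. j \<in> {1..length zs} \<and> sublist (xC zs) (mrg (zs ! (j - 1) # rotate j zs))"
    using xp unfolding xC_props_def by blast
  then obtain jf where jf: "\<And>zs. zs \<in> set Cs \<Longrightarrow> jf zs \<in> {1..length zs} \<and> sublist (xC zs) (mrg (zs ! (jf zs - 1) # rotate (jf zs) zs))"
    using bchoice by metis
  define zf where "zf zs = zs ! (jf zs - 1)" for zs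
  define yf where "yf zs = mrg (zf zs # rotate (jf zs) zs)" for zs
  have zf_in: "zf zs \<in> set zs" if zs: "zs \<in> set Cs" for zs
  proof -
    have "jf zs - 1 < length zs" using jf[OF zs] by auto
    then show ?thesis unfolding zf_def by (rule nth_mem)
  qed
  have zfV: "\<And>zs. zs \<in> set Cs \<Longrightarrow> zf zs \<in> vertices S" using zf_in cyc(3) by auto
  have yfacts: "\<And>zs. zs \<in> set Cs \<Longrightarrow> length (yf zs) = cyc_weight zs + length (zf zs) \<and> prefix (zf zs) (yf zs) \<and> suffix (zf zs) (yf zs)"
    using jf yC_facts unfolding yf_def zf_def by auto
  have xsub: "\<And>zs. zs \<in> set Cs \<Longrightarrow> sublist (xC zs) (yf zs)" using jf by (simp add: yf_def zf_def)
  have occ: "\<And>zs. zs \<in> set Cs \<Longrightarrow> sublist (zf zs) w0 \<or> sublist (rc (zf zs)) w0"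
  proof -
    fix zs assume zs: "zs \<in> set Cs"
    obtain s where s: "s \<in> S" "zf zs = s \<or> zf zs = rc s" using zfV[OF zs] by (auto simp: vertices_def)
    then show "sublist (zf zs) w0 \<or> sublist (rc (zf zs)) w0" using w0(2) by auto
  qed
  define ofz where "ofz zs = (if sublist (zf zs) w0 then zf zs else rc (zf zs))" for zs
  define gof where "gof zs = (if sublist (zf zs) w0 then yf zs else rc (yf zs))" for zs
  have of_sub: "\<And>zs. zs \<in> set Cs \<Longrightarrow> sublist (ofz zs) w0" using occ by (auto simp: ofz_def)
  have ofV: "\<And>zs. zs \<in> set Cs \<Longrightarrow> ofz zs \<in> vertices S" using zfV vertices_rc by (auto simp: ofz_def)
  have ofg: "\<And>zs. zs \<in> set Cs \<Longrightarrow> prefix (ofz zs) (gof zs) \<and> suffix (ofz zs) (gof zs)"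
    using yfacts prefix_rc suffix_rc by (auto simp: ofz_def gof_def)
  have oflen: "\<And>zs. zs \<in> set Cs \<Longrightarrow> length (gof zs) - length (ofz zs) = cyc_weight zs"
    using yfacts by (auto simp: ofz_def gof_def)
  have pw: "\<forall>i\<in>set Cs. \<forall>j\<in>set Cs. i \<noteq> j \<longrightarrow> \<not> sublist (ofz i) (ofz j)"
  proof (intro ballI impI)
    fix A B assume A: "A \<in> set Cs" and B: "B \<in> set Cs" and AB: "A \<noteq> B"
    have zne: "zf A \<noteq> zf B" using disj[OF A B AB] zf_in[OF A] zf_in[OF B] by auto
    have zA: "zf A \<in> set (concat Cs)" "zf B \<in> set (concat Cs)" using zf_in A B by auto
    have zrc: "zf A \<noteq> rc (zf B)"
    proof
      assume e: "zf A = rc (zf B)"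
      then have "rc (zf B) = zf B" using cyc(4) zA by auto
      then show False using e zne by simp
    qed
    have zrc2: "rc (zf A) \<noteq> zf B" using zrc by (metis rc_rc)
    have "ofz A \<noteq> ofz B" using zne zrc zrc2 rc_inj by (auto simp: ofz_def)
    then show "\<not> sublist (ofz A) (ofz B)" using sfree ofV A B by blast
  qed
  show ?thesis
  proof (cases "Cs = []")
    case True
    have "OPT (xC ` set Cs) \<le> 0" unfolding OPT_def using True by (intro Least_le) auto
    then show ?thesis by simp
  next
    case False
    obtain L where L: "mset L = mset Cs" "length (mrg (map ofz L)) \<le> length w0"
      using order_exists[OF False distCs, of ofz w0] of_sub pw by blast
    have setL: "set L = set Cs" using L(1) by (metis set_mset_mset)
    define W where "W = mrg (map gof L)"
    have "length W \<le> length (mrg (map ofz L)) + sum_list (map (\<lambda>i. length (gof i) - length (ofz i)) L)"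
      unfolding W_def using ofg setL by (intro mrg_replace) auto
    also have "sum_list (map (\<lambda>i. length (gof i) - length (ofz i)) L) = sum_list (map cyc_weight L)"
      using oflen setL by (intro arg_cong[where f=sum_list] map_cong) auto
    also have "\<dots> = sum_list (map cyc_weight Cs)" by (rule sum_list_map_mset[OF L(1)])
    finally have lW: "length W \<le> OPT S + wCYC S" using L(2) w0(1) gf(2) by simp
    have "\<forall>u\<in>xC ` set Cs. sublist u W \<or> sublist (rc u) W"
    proof
      fix u assume "u \<in> xC ` set Cs"
      then obtain zs where zs: "zs \<in> set Cs" "u = xC zs" by blast
      have "sublist (gof zs) W" unfolding W_def using zs setL by (intro sublist_mrg) auto
      moreover have "sublist u (gof zs) \<or> sublist (rc u) (gof zs)"
        using xsub[OF zs(1)] zs(2) sublist_rc by (auto simp: gof_def)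
      ultimately show "sublist u W \<or> sublist (rc u) W" by (meson sublist_order.order.trans)
    qed
    then have "OPT (xC ` set Cs) \<le> length W" unfolding OPT_def by (intro Least_le) blast
    then show ?thesis using lW by simp
  qed
qed

end
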